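(* Consider the augmenting-path algorithm for online generalized network flow with resulting flows $x^{(0)},x^{(1)},\dots,x^{(T)}$. Let $t\in[T]$ and let $v$ be a vertex of the graph at time $t-1$. Then $\mathrm{height}_t(v)\ge\mathrm{height}_{t-1}(v)$.
   Context: Generalized network flow instance: digraph $G=(V,E)$ without anti-parallel edges, sources with no incoming edges, sink $\tau$ with no outgoing edges, edge capacities $\mu_e>0$, costs $c_e>0$, gains $\gamma_e>0$; convention: every vertex $v\ne\tau$ has a dummy edge $v\tau$ of infinite capacity, gain $1$ and sufficiently large cost $B$. Online generalized network flow: sources $s_1,\dots,s_T$ (each with supply $1$) arrive one at a time with their outgoing edges. Residual graph $G^x$ for $x$ with $0\le x_e\le\mu_e$: forward edge $uv$ (capacity $\mu_{uv}-x_{uv}$, cost $c_{uv}$, gain $\gamma_{uv}$) if $x_{uv}<\mu_{uv}$; backward edge $vu$ (capacity $\gamma_{uv}x_{uv}$, cost $0$, gain $1/\gamma_{uv}$) if $x_{uv}>0$. A fractional augmenting path from $s\neq\tau$ in $G^x$ is $f\ge0$ on the residual edges with out-minus-gain-weighted-in flow equal to $1$ at $s$ and $0$ at every vertex other than $s,\tau$; cost $\sum_e c^x_ef_e$. It is an augmenting path if its support is a path from $s$ to $\tau$, or a cycle through $s$ avoiding $\tau$, or a cycle avoiding $s,\tau$ together with a path from $s$ to the cycle internally disjoint from it. Augmenting $x$ by $\theta$ units using $f$: for each forward residual edge $uv$ set $x_{uv}\gets x_{uv}+\theta f_{uv}$, and for each backward residual edge $vu$ set $x_{uv}\gets x_{uv}-\theta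 f_{vu}/\gamma_{uv}$. The algorithm: $x^{(0)}=0$; at time $t$, add $s_t$ and its edges, set $x\gets x^{(t-1)}$ (zero on new edges), and while $\sum_{e\in\delta^+(s_t)}x_e<1$, find a cheapest augmenting path $f$ from $s_t$ in $G^x$, let $\theta>0$ be the largest value such that augmenting by $\theta$ using $f$ keeps $x_e\in[0,\mu_e]$ for all $e$ and $\sum_{e\in\delta^+(s_t)}x_e\le1$, and augment; finally $x^{(t)}\gets x$. For a vertex $v\ne\tau$ present at time $t$, $\mathrm{height}_t(v)$ is the minimum cost of an augmenting path from $v$ in $G^{x^{(t)}}$; $\mathrm{height}_t(\tau)=0$. *)

theory Defs
  imports Complex_Main
begin

text \<open>Real edges are pairs
  of vertices; the dummy edge v\<rightarrow>sink of every vertex v is represented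
  separately (Inr v), with infinite capacity, gain 1 and cost B.\<close>

record 'v gnet =
  verts  :: "'v set"
  redges :: "('v \<times> 'v) set"
  sink   :: 'v
  cap    :: "'v \<times> 'v \<Rightarrow> real"
  ecost  :: "'v \<times> 'v \<Rightarrow> real"
  egain  :: "'v \<times> 'v \<Rightarrow> real"

type_synonym 'v edge = "('v \<times> 'v) + 'v"
type_synonym 'v redge = "'v edge \<times> bool"  \<comment> \<open>True = forward, False = backward\<close>
type_synonym 'v flow = "'v edge \<Rightarrow> real"

definition tailE :: "'v edge \<Rightarrow> 'v" where
  "tailE e = (case e of Inl a \<Rightarrow> fst a | Inr v \<Rightarrow> v)"

definition headE :: "'v gnet \<Rightarrow> 'v edge \<Rightarrow> 'v" where
  "headE N e = (case e of Inl a \<Rightarrow> snd a | Inr v \<Rightarrow> sink N)"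

definition costE :: "'v gnet \<Rightarrow> real \<Rightarrow> 'v edge \<Rightarrow> real" where
  "costE N B e = (case e of Inl a \<Rightarrow> ecost N a | Inr v \<Rightarrow> B)"

definition gainE :: "'v gnet \<Rightarrow> 'v edge \<Rightarrow> real" where
  "gainE N e = (case e of Inl a \<Rightarrow> egain N a | Inr v \<Rightarrow> 1)"

definition below_cap :: "'v gnet \<Rightarrow> 'v flow \<Rightarrow> 'v edge \<Rightarrow> bool" where
  "below_cap N x e = (case e of Inl a \<Rightarrow> x e < cap N a | Inr v \<Rightarrow> True)"

definition within_cap :: "'v gnet \<Rightarrow> 'v flow \<Rightarrow> 'v edge \<Rightarrow> bool" where
  "within_cap N x e = (case e of Inl a \<Rightarrow> x e \<le> cap N a | Inr v \<Rightarrow> True)"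

definition gnf_instance :: "'v gnet \<Rightarrow> (nat \<Rightarrow> 'v) \<Rightarrow> nat \<Rightarrow> bool" where
  "gnf_instance N s T \<longleftrightarrow>
     finite (verts N) \<and> redges N \<subseteq> verts N \<times> verts N \<and> sink N \<in> verts N \<and>
     (\<forall>(u,w)\<in>redges N. (w,u) \<notin> redges N) \<and>
     (\<forall>(u,w)\<in>redges N. u \<noteq> sink N) \<and>
     (\<forall>e\<in>redges N. cap N e > 0 \<and> ecost N e > 0 \<and> egain N e > 0) \<and>
     inj_on s {1..T} \<and>
     (\<forall>i\<in>{1..T}. s i \<in> verts N \<and> s i \<noteq> sink N \<and> (\<forall>(u,w)\<in>redges N. w \<noteq> s i))"

text \<open>Graph present at time t: all vertices except the sources that have not yet arrived.\<close>
definition verts_at :: "'v gnet \<Rightarrow> (nat \<Rightarrow> 'v) \<Rightarrow> nat \<Rightarrow> nat \<Rightarrow> 'v set" where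
  "verts_at N s T t = verts N - s ` {Suc t..T}"

definition edges_at :: "'v gnet \<Rightarrow> (nat \<Rightarrow> 'v) \<Rightarrow> nat \<Rightarrow> nat \<Rightarrow> 'v edge set" where
  "edges_at N s T t =
     {Inl a | a. a \<in> redges N \<and> fst a \<in> verts_at N s T t} \<union>
     {Inr v | v. v \<in> verts_at N s T t \<and> v \<noteq> sink N}"

definition res_edges :: "'v gnet \<Rightarrow> (nat \<Rightarrow> 'v) \<Rightarrow> nat \<Rightarrow> nat \<Rightarrow> 'v flow \<Rightarrow> 'v redge set" where
  "res_edges N s T t x =
     {(e, True) | e. e \<in> edges_at N s T t \<and> below_cap N x e} \<union>
     {(e, False) | e. e \<in> edges_at N s T t \<and> x e > 0}"

definition rtail :: "'v gnet \<Rightarrow> 'v redge \<Rightarrow> 'v" where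
  "rtail N r = (if snd r then tailE (fst r) else headE N (fst r))"

definition rhead :: "'v gnet \<Rightarrow> 'v redge \<Rightarrow> 'v" where
  "rhead N r = (if snd r then headE N (fst r) else tailE (fst r))"

definition rcost :: "'v gnet \<Rightarrow> real \<Rightarrow> 'v redge \<Rightarrow> real" where
  "rcost N B r = (if snd r then costE N B (fst r) else 0)"

definition rgain :: "'v gnet \<Rightarrow> 'v redge \<Rightarrow> real" where
  "rgain N r = (if snd r then gainE N (fst r) else 1 / gainE N (fst r))"

definition frac_aug_path ::
  "'v gnet \<Rightarrow> (nat \<Rightarrow> 'v) \<Rightarrow> nat \<Rightarrow> nat \<Rightarrow> 'v flow \<Rightarrow> 'v \<Rightarrow> ('v redge \<Rightarrow> real) \<Rightarrow> bool" where
  "frac_aug_path N s T t x a f \<longleftrightarrow>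
     (\<forall>r. 0 \<le> f r) \<and> (\<forall>r. f r \<noteq> 0 \<longrightarrow> r \<in> res_edges N s T t x) \<and>
     (\<forall>w \<in> verts_at N s T t - {sink N}.
        (\<Sum>r\<in>{r \<in> res_edges N s T t x. rtail N r = w}. f r)
        - (\<Sum>r\<in>{r \<in> res_edges N s T t x. rhead N r = w}. rgain N r * f r)
        = (if w = a then 1 else 0))"

definition path_cost ::
  "'v gnet \<Rightarrow> real \<Rightarrow> (nat \<Rightarrow> 'v) \<Rightarrow> nat \<Rightarrow> nat \<Rightarrow> 'v flow \<Rightarrow> ('v redge \<Rightarrow> real) \<Rightarrow> real" where
  "path_cost N B s T t x f = (\<Sum>r\<in>res_edges N s T t x. rcost N B r * f r)"

fun rchain :: "'v gnet \<Rightarrow> 'v redge list \<Rightarrow> bool" where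
  "rchain N [] = True"
| "rchain N [r] = True"
| "rchain N (r1 # r2 # rs) = (rhead N r1 = rtail N r2 \<and> rchain N (r2 # rs))"

definition pverts :: "'v gnet \<Rightarrow> 'v redge list \<Rightarrow> 'v list" where
  "pverts N rs = map (rtail N) rs @ [rhead N (last rs)]"

definition is_rpath :: "'v gnet \<Rightarrow> 'v redge list \<Rightarrow> 'v \<Rightarrow> 'v \<Rightarrow> bool" where
  "is_rpath N rs a b \<longleftrightarrow> rs \<noteq> [] \<and> rchain N rs \<and> rtail N (hd rs) = a \<and>
     rhead N (last rs) = b \<and> distinct (pverts N rs)"

definition is_rcycle :: "'v gnet \<Rightarrow> 'v redge list \<Rightarrow> bool" where
  "is_rcycle N rs \<longleftrightarrow> rs \<noteq> [] \<and> rchain N rs \<and> rhead N (last rs) = rtail N (hd rs) \<and>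
     distinct (map (rtail N) rs)"

definition aug_path ::
  "'v gnet \<Rightarrow> (nat \<Rightarrow> 'v) \<Rightarrow> nat \<Rightarrow> nat \<Rightarrow> 'v flow \<Rightarrow> 'v \<Rightarrow> ('v redge \<Rightarrow> real) \<Rightarrow> bool" where
  "aug_path N s T t x a f \<longleftrightarrow> frac_aug_path N s T t x a f \<and>
     (let S = {r. 0 < f r} in
       (\<exists>P. is_rpath N P a (sink N) \<and> S = set P) \<or>
       (\<exists>C. is_rcycle N C \<and> a \<in> set (map (rtail N) C) \<and> sink N \<notin> set (map (rtail N) C) \<and>
            S = set C) \<or>
       (\<exists>C P w. is_rcycle N C \<and> a \<notin> set (map (rtail N) C) \<and> sink N \<notin> set (map (rtail N) C) \<and>
            w \<in> set (map (rtail N) C) \<and> is_rpath N P a w \<and>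
            set (butlast (pverts N P)) \<inter> set (map (rtail N) C) = {} \<and>
            S = set P \<union> set C))"

definition height ::
  "'v gnet \<Rightarrow> real \<Rightarrow> (nat \<Rightarrow> 'v) \<Rightarrow> nat \<Rightarrow> nat \<Rightarrow> 'v flow \<Rightarrow> 'v \<Rightarrow> real" where
  "height N B s T t x v =
     (if v = sink N then 0
      else Inf (path_cost N B s T t x ` {f. aug_path N s T t x v f}))"

definition cheapest ::
  "'v gnet \<Rightarrow> real \<Rightarrow> (nat \<Rightarrow> 'v) \<Rightarrow> nat \<Rightarrow> nat \<Rightarrow> 'v flow \<Rightarrow> 'v \<Rightarrow> ('v redge \<Rightarrow> real) \<Rightarrow> bool" where
  "cheapest N B s T t x a f \<longleftrightarrow> aug_path N s T t x a f \<and>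
     (\<forall>g. aug_path N s T t x a g \<longrightarrow> path_cost N B s T t x f \<le> path_cost N B s T t x g)"

definition augment :: "'v gnet \<Rightarrow> 'v flow \<Rightarrow> ('v redge \<Rightarrow> real) \<Rightarrow> real \<Rightarrow> 'v flow" where
  "augment N x f \<theta> = (\<lambda>e. x e + \<theta> * f (e, True) - \<theta> * f (e, False) / gainE N e)"

definition outflow :: "'v gnet \<Rightarrow> (nat \<Rightarrow> 'v) \<Rightarrow> nat \<Rightarrow> nat \<Rightarrow> 'v flow \<Rightarrow> 'v \<Rightarrow> real" where
  "outflow N s T t x a = (\<Sum>e\<in>{e \<in> edges_at N s T t. tailE e = a}. x e)"

definition feasible_at :: "'v gnet \<Rightarrow> (nat \<Rightarrow> 'v) \<Rightarrow> nat \<Rightarrow> nat \<Rightarrow> 'v flow \<Rightarrow> bool" where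
  "feasible_at N s T t x \<longleftrightarrow> (\<forall>e\<in>edges_at N s T t. 0 \<le> x e \<and> within_cap N x e)"

definition theta_ok ::
  "'v gnet \<Rightarrow> (nat \<Rightarrow> 'v) \<Rightarrow> nat \<Rightarrow> nat \<Rightarrow> 'v flow \<Rightarrow> ('v redge \<Rightarrow> real) \<Rightarrow> real \<Rightarrow> bool" where
  "theta_ok N s T t x f \<theta> \<longleftrightarrow> feasible_at N s T t (augment N x f \<theta>) \<and>
     outflow N s T t (augment N x f \<theta>) (s t) \<le> 1"

definition alg_step ::
  "'v gnet \<Rightarrow> real \<Rightarrow> (nat \<Rightarrow> 'v) \<Rightarrow> nat \<Rightarrow> nat \<Rightarrow> 'v flow \<Rightarrow> 'v flow \<Rightarrow> bool" where
  "alg_step N B s T t x x' \<longleftrightarrow> outflow N s T t x (s t) < 1 \<and>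
     (\<exists>f \<theta>. cheapest N B s T t x (s t) f \<and> 0 < \<theta> \<and> theta_ok N s T t x f \<theta> \<and>
        (\<forall>\<theta>'. 0 < \<theta>' \<and> theta_ok N s T t x f \<theta>' \<longrightarrow> \<theta>' \<le> \<theta>) \<and>
        x' = augment N x f \<theta>)"

definition alg_phase ::
  "'v gnet \<Rightarrow> real \<Rightarrow> (nat \<Rightarrow> 'v) \<Rightarrow> nat \<Rightarrow> nat \<Rightarrow> 'v flow \<Rightarrow> 'v flow \<Rightarrow> bool" where
  "alg_phase N B s T t x0 x' \<longleftrightarrow> (alg_step N B s T t)\<^sup>*\<^sup>* x0 x' \<and> \<not> outflow N s T t x' (s t) < 1"

definition restrict_flow :: "'v gnet \<Rightarrow> (nat \<Rightarrow> 'v) \<Rightarrow> nat \<Rightarrow> nat \<Rightarrow> 'v flow \<Rightarrow> 'v flow" where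
  "restrict_flow N s T t x = (\<lambda>e. if e \<in> edges_at N s T t then x e else 0)"

definition alg_run :: "'v gnet \<Rightarrow> real \<Rightarrow> (nat \<Rightarrow> 'v) \<Rightarrow> nat \<Rightarrow> (nat \<Rightarrow> 'v flow) \<Rightarrow> bool" where
  "alg_run N B s T xs \<longleftrightarrow> xs 0 = (\<lambda>_. 0) \<and>
     (\<forall>t\<in>{1..T}. alg_phase N B s T t (restrict_flow N s T (t - 1) (xs (t - 1))) (xs t))"

end

theory Submission
  imports Defs
begin

locale gnfl =
  fixes N :: "'v gnet" and s :: "nat \<Rightarrow> 'v" and T :: nat and B :: real
  assumes inst: "gnf_instance N s T" and Bnn: "0 \<le> B"
begin

lemma inst_parts:
  "finite (verts N)" "redges N \<subseteq> verts N \<times> verts N" "sink N \<in> verts N"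
  "\<And>u w. (u,w) \<in> redges N \<Longrightarrow> (w,u) \<notin> redges N"
  "\<And>u w. (u,w) \<in> redges N \<Longrightarrow> u \<noteq> sink N"
  "\<And>e. e \<in> redges N \<Longrightarrow> cap N e > 0 \<and> ecost N e > 0 \<and> egain N e > 0"
  "\<And>i. i \<in> {1..T} \<Longrightarrow> s i \<in> verts N \<and> s i \<noteq> sink N \<and> (\<forall>(u,w)\<in>redges N. w \<noteq> s i)"
  using inst unfolding gnf_instance_def by auto

lemma fin_edges: "finite (edges_at N s T t)"
proof -
  have fr: "finite (redges N)" using inst_parts(1,2) finite_subset by (metis finite_SigmaI)
  have "edges_at N s T t \<subseteq> Inl ` redges N \<union> Inr ` verts N"
    unfolding edges_at_def verts_at_def by auto
  moreover have "finite (Inl ` redges N \<union> Inr ` verts N)" using fr inst_parts(1) by auto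
  ultimately show ?thesis using finite_subset by blast
qed

lemma fin_res: "finite (res_edges N s T t x)"
proof -
  have "res_edges N s T t x \<subseteq> edges_at N s T t \<times> UNIV"
    unfolding res_edges_def by auto
  moreover have "finite (edges_at N s T t \<times> (UNIV::bool set))" using fin_edges by auto
  ultimately show ?thesis using finite_subset by blast
qed

lemma sink_V: "sink N \<in> verts_at N s T t"
proof -
  have "sink N \<notin> s ` {Suc t..T}"
  proof
    assume "sink N \<in> s ` {Suc t..T}"
    then obtain i where "i \<in> {Suc t..T}" "sink N = s i" by auto
    then show False using inst_parts(7)[of i] by auto
  qed
  then show ?thesis using inst_parts(3) unfolding verts_at_def by auto
qed

lemma edge_props:
  assumes "e \<in> edges_at N s T t"
  shows "tailE e \<in> verts_at N s T t" "headE N e \<in> verts_at N s T t"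
    "gainE N e > 0" "costE N B e \<ge> 0" "tailE e \<noteq> headE N e"
proof -
  consider (L) a where "e = Inl a" "a \<in> redges N" "fst a \<in> verts_at N s T t"
    | (R) v where "e = Inr v" "v \<in> verts_at N s T t" "v \<noteq> sink N"
    using assms unfolding edges_at_def by blast
  then have "tailE e \<in> verts_at N s T t \<and> headE N e \<in> verts_at N s T t \<and>
    gainE N e > 0 \<and> costE N B e \<ge> 0 \<and> tailE e \<noteq> headE N e"
  proof cases
    case (L a)
    obtain u w where a: "a = (u,w)" by force
    have "w \<in> verts N" using L inst_parts(2) a by auto
    moreover have "w \<notin> s ` {Suc t..T}"
    proof
      assume "w \<in> s ` {Suc t..T}"
      then obtain i where "i \<in> {Suc t..T}" "w = s i" by auto
      then show False using inst_parts(7)[of i] L a by auto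
    qed
    moreover have "u \<noteq> w" using inst_parts(4)[of u w] L a by auto
    ultimately show ?thesis using L a inst_parts(6)[of a]
      by (auto simp: tailE_def headE_def gainE_def costE_def verts_at_def)
  next
    case (R v)
    then show ?thesis using sink_V Bnn
      by (auto simp: tailE_def headE_def gainE_def costE_def)
  qed
  then show "tailE e \<in> verts_at N s T t" "headE N e \<in> verts_at N s T t"
    "gainE N e > 0" "costE N B e \<ge> 0" "tailE e \<noteq> headE N e" by auto
qed

lemma res_props:
  assumes "r \<in> res_edges N s T t x"
  shows "rtail N r \<in> verts_at N s T t" "rhead N r \<in> verts_at N s T t"
    "rgain N r > 0" "rcost N B r \<ge> 0" "rtail N r \<noteq> rhead N r"
proof -
  have e: "fst r \<in> edges_at N s T t" using assms unfolding res_edges_def by auto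
  note ep = edge_props[OF e]
  show "rtail N r \<in> verts_at N s T t" "rhead N r \<in> verts_at N s T t"
    "rgain N r > 0" "rcost N B r \<ge> 0" "rtail N r \<noteq> rhead N r"
    using ep by (auto simp: rtail_def rhead_def rgain_def rcost_def)
qed

lemma rchain_Cons: "rchain N (r # rs) = (rchain N rs \<and> (rs \<noteq> [] \<longrightarrow> rhead N r = rtail N (hd rs)))"
  by (cases rs) auto

lemma rchain_append: "rchain N (xs @ ys) =
   (rchain N xs \<and> rchain N ys \<and> (xs \<noteq> [] \<and> ys \<noteq> [] \<longrightarrow> rhead N (last xs) = rtail N (hd ys)))"
  by (induction xs) (auto simp: rchain_Cons)

lemma rchain_nth: "rchain N L = (\<forall>i. Suc i < length L \<longrightarrow> rhead N (L!i) = rtail N (L!Suc i))"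
proof (induction L)
  case Nil then show ?case by simp
next
  case (Cons r rs)
  show ?case
  proof
    assume h: "rchain N (r # rs)"
    show "\<forall>i. Suc i < length (r # rs) \<longrightarrow> rhead N ((r # rs) ! i) = rtail N ((r # rs) ! Suc i)"
    proof (intro allI impI)
      fix i assume i: "Suc i < length (r # rs)"
      show "rhead N ((r # rs) ! i) = rtail N ((r # rs) ! Suc i)"
      proof (cases i)
        case 0 then show ?thesis using h i by (cases rs) auto
      next
        case (Suc j) then show ?thesis using h i Cons.IH by (auto simp: rchain_Cons)
      qed
    qed
  next
    assume h: "\<forall>i. Suc i < length (r # rs) \<longrightarrow> rhead N ((r # rs) ! i) = rtail N ((r # rs) ! Suc i)"
    have "rchain N rs" using Cons.IH h by auto
    moreover have "rs \<noteq> [] \<longrightarrow> rhead N r = rtail N (hd rs)"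
      using h[rule_format, of 0] by (cases rs) auto
    ultimately show "rchain N (r # rs)" by (simp add: rchain_Cons)
  qed
qed

lemma rchain_take: "rchain N L \<Longrightarrow> rchain N (take n L)"
  by (auto simp: rchain_nth)

lemma rchain_drop: "rchain N L \<Longrightarrow> rchain N (drop n L)"
  by (auto simp: rchain_nth)

fun wflow :: "'v redge list \<Rightarrow> 'v redge \<Rightarrow> real" where
  "wflow [] = (\<lambda>_. 0)"
| "wflow (r # rs) = (\<lambda>q. (if q = r then 1 else 0) + rgain N r * wflow rs q)"

fun wcost :: "'v redge list \<Rightarrow> real" where
  "wcost [] = 0"
| "wcost (r # rs) = rcost N B r + rgain N r * wcost rs"

definition gprod :: "'v redge list \<Rightarrow> real" where
  "gprod L = prod_list (map (rgain N) L)"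

definition exc :: "nat \<Rightarrow> 'v flow \<Rightarrow> ('v redge \<Rightarrow> real) \<Rightarrow> 'v \<Rightarrow> real" where
  "exc t x f w = (\<Sum>r\<in>{r \<in> res_edges N s T t x. rtail N r = w}. f r)
        - (\<Sum>r\<in>{r \<in> res_edges N s T t x. rhead N r = w}. rgain N r * f r)"

lemma gprod_simps[simp]: "gprod [] = 1" "gprod (r # rs) = rgain N r * gprod rs"
  "gprod (xs @ ys) = gprod xs * gprod ys"
  by (auto simp: gprod_def)

lemma gprod_pos: "set L \<subseteq> res_edges N s T t x \<Longrightarrow> gprod L > 0"
  by (induction L) (auto intro!: mult_pos_pos res_props(3))

lemma wflow_nonneg: "set L \<subseteq> res_edges N s T t x \<Longrightarrow> 0 \<le> wflow L q"
proof (induction L)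
  case Nil then show ?case by simp
next
  case (Cons r rs)
  then have "0 < rgain N r" using res_props(3)[of r t x] by auto
  then show ?case using Cons by auto
qed

lemma wflow_pos_iff: "set L \<subseteq> res_edges N s T t x \<Longrightarrow> (0 < wflow L q) = (q \<in> set L)"
proof (induction L)
  case Nil then show ?case by simp
next
  case (Cons r rs)
  then have g: "0 < rgain N r" using res_props(3)[of r t x] by auto
  have n: "0 \<le> wflow rs q" using Cons.prems wflow_nonneg[of rs t x q] by auto
  show ?case
  proof (cases "q = r")
    case True
    then have "wflow (r # rs) q = 1 + rgain N r * wflow rs q" by simp
    moreover have "0 \<le> rgain N r * wflow rs q" using g n by simp
    ultimately show ?thesis using True by simp
  next
    case False
    then have "wflow (r # rs) q = rgain N r * wflow rs q" by simp
    moreover have "(0 < rgain N r * wflow rs q) = (0 < wflow rs q)" using g by (simp add: zero_less_mult_iff)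
    ultimately show ?thesis using False Cons by simp
  qed
qed

lemma wflow_append: "wflow (L1 @ L2) q = wflow L1 q + gprod L1 * wflow L2 q"
  by (induction L1) (auto simp: algebra_simps)

lemma wcost_append: "wcost (L1 @ L2) = wcost L1 + gprod L1 * wcost L2"
  by (induction L1) (auto simp: algebra_simps)

lemma wcost_nonneg: "set L \<subseteq> res_edges N s T t x \<Longrightarrow> 0 \<le> wcost L"
proof (induction L)
  case Nil then show ?case by simp
next
  case (Cons r rs)
  then have "0 < rgain N r" "0 \<le> rcost N B r" using res_props(3,4)[of r t x] by auto
  then show ?case using Cons by auto
qed

lemma path_cost_lin: "path_cost N B s T t x (\<lambda>q. f q + c * g q) =
    path_cost N B s T t x f + c * path_cost N B s T t x g"
  unfolding path_cost_def by (simp add: algebra_simps sum.distrib sum_distrib_left)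

lemma path_cost_scale: "path_cost N B s T t x (\<lambda>q. f q / c) = path_cost N B s T t x f / c"
  unfolding path_cost_def by (simp add: sum_divide_distrib)

lemma path_cost_wflow: "set L \<subseteq> res_edges N s T t x \<Longrightarrow> path_cost N B s T t x (wflow L) = wcost L"
proof (induction L)
  case Nil then show ?case by (simp add: path_cost_def)
next
  case (Cons r rs)
  have "path_cost N B s T t x (wflow (r # rs)) =
      path_cost N B s T t x (\<lambda>q. if q = r then 1 else 0) + rgain N r * path_cost N B s T t x (wflow rs)"
    using path_cost_lin[of t x "\<lambda>q. if q = r then 1 else 0" "rgain N r" "wflow rs"] by simp
  also have "path_cost N B s T t x (\<lambda>q. if q = r then 1 else 0) = rcost N B r"
    using Cons.prems fin_res[of t x] unfolding path_cost_def
    by (simp add: if_distrib[of "\<lambda>z. rcost N B _ * z"] cong: if_cong)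
  finally show ?case using Cons by simp
qed

lemma path_cost_nonneg: "(\<And>r. 0 \<le> f r) \<Longrightarrow> 0 \<le> path_cost N B s T t x f"
  unfolding path_cost_def using res_props(4) by (auto intro!: sum_nonneg)

lemma exc_lin: "exc t x (\<lambda>q. f q + c * g q) w = exc t x f w + c * exc t x g w"
  unfolding exc_def by (simp add: algebra_simps sum.distrib sum_distrib_left)

lemma exc_scale: "exc t x (\<lambda>q. f q / c) w = exc t x f w / c"
  unfolding exc_def by (simp add: sum_divide_distrib diff_divide_distrib)

lemma exc_ind: "r \<in> res_edges N s T t x \<Longrightarrow> exc t x (\<lambda>q. if q = r then 1 else 0) w =
   (if rtail N r = w then 1 else 0) - rgain N r * (if rhead N r = w then 1 else 0)"
  unfolding exc_def using fin_res[of t x]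
  by (simp add: if_distrib[of "\<lambda>z. rgain N _ * z"] cong: if_cong)

lemma exc_wflow: "L \<noteq> [] \<Longrightarrow> rchain N L \<Longrightarrow> set L \<subseteq> res_edges N s T t x \<Longrightarrow>
  exc t x (wflow L) w = (if rtail N (hd L) = w then 1 else 0) - gprod L * (if rhead N (last L) = w then 1 else 0)"
proof (induction L)
  case Nil then show ?case by simp
next
  case (Cons r rs)
  have e: "exc t x (wflow (r # rs)) w = exc t x (\<lambda>q. if q = r then 1 else 0) w + rgain N r * exc t x (wflow rs) w"
    using exc_lin[of t x "\<lambda>q. if q = r then 1 else 0" "rgain N r" "wflow rs" w] by simp
  show ?case
  proof (cases "rs = []")
    case True
    then have "exc t x (wflow rs) w = 0" by (simp add: exc_def)
    then show ?thesis using e exc_ind[of r t x w] Cons.prems True by simp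
  next
    case False
    then have ih: "exc t x (wflow rs) w = (if rtail N (hd rs) = w then 1 else 0) - gprod rs * (if rhead N (last rs) = w then 1 else 0)"
      using Cons by (auto simp: rchain_Cons)
    have "rhead N r = rtail N (hd rs)" using Cons.prems False by (auto simp: rchain_Cons)
    then show ?thesis using e exc_ind[of r t x w] Cons.prems False ih by (simp add: algebra_simps)
  qed
qed

lemma frac_iff: "frac_aug_path N s T t x a f \<longleftrightarrow> (\<forall>r. 0 \<le> f r) \<and> (\<forall>r. f r \<noteq> 0 \<longrightarrow> r \<in> res_edges N s T t x) \<and>
   (\<forall>w \<in> verts_at N s T t - {sink N}. exc t x f w = (if w = a then 1 else 0))"
  unfolding frac_aug_path_def exc_def by simp

definition lasso :: "nat \<Rightarrow> 'v flow \<Rightarrow> 'v redge list \<Rightarrow> 'v \<Rightarrow> nat option \<Rightarrow> bool" where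
  "lasso t x L a k \<longleftrightarrow> L \<noteq> [] \<and> set L \<subseteq> res_edges N s T t x \<and> rchain N L \<and> rtail N (hd L) = a \<and>
     distinct (map (rtail N) L) \<and>
     (case k of None \<Rightarrow> rhead N (last L) = sink N \<and> sink N \<notin> set (map (rtail N) L)
      | Some i \<Rightarrow> i < length L \<and> rhead N (last L) = rtail N (L!i) \<and> sink N \<notin> set (map (rtail N) (drop i L)))"

definition saug :: "nat \<Rightarrow> 'v flow \<Rightarrow> 'v \<Rightarrow> ('v redge \<Rightarrow> real) \<Rightarrow> bool" where
  "saug t x a f \<longleftrightarrow> frac_aug_path N s T t x a f \<and> (\<exists>L k. lasso t x L a k \<and> {r. 0 < f r} = set L)"

definition snice :: "nat \<Rightarrow> 'v flow \<Rightarrow> 'v \<Rightarrow> ('v redge \<Rightarrow> real) \<Rightarrow> bool" where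
  "snice t x a f \<longleftrightarrow> frac_aug_path N s T t x a f \<and>
     (\<exists>L k. lasso t x L a k \<and> sink N \<notin> set (map (rtail N) L) \<and> {r. 0 < f r} = set L)"

lemma distinct_nth_notin_drop: "distinct xs \<Longrightarrow> j < i \<Longrightarrow> i \<le> length xs \<Longrightarrow> xs ! j \<notin> set (drop i xs)"
proof
  assume d: "distinct xs" "j < i" "i \<le> length xs" and "xs ! j \<in> set (drop i xs)"
  then obtain m where m: "m < length xs - i" "drop i xs ! m = xs ! j" by (auto simp: in_set_conv_nth)
  then have "xs ! (i + m) = xs ! j" using d by simp
  then have "i + m = j" using d m nth_eq_iff_index_eq[of xs "i+m" j] by simp
  then show False using d by simp
qed

lemma distinct_nth_notin_take: "distinct xs \<Longrightarrow> i < length xs \<Longrightarrow> xs ! i \<notin> set (take i xs)"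
proof
  assume d: "distinct xs" "i < length xs" and "xs ! i \<in> set (take i xs)"
  then obtain m where m: "m < i" "take i xs ! m = xs ! i" by (auto simp: in_set_conv_nth)
  then have "xs ! m = xs ! i" using d by simp
  then have "m = i" using d m nth_eq_iff_index_eq[of xs m i] by simp
  then show False using m by simp
qed

lemma saug_aug: assumes "saug t x a f" shows "aug_path N s T t x a f"
proof -
  obtain L k where fr: "frac_aug_path N s T t x a f" and las: "lasso t x L a k" and S: "{r. 0 < f r} = set L"
    using assms unfolding saug_def by blast
  have L: "L \<noteq> []" "rchain N L" "rtail N (hd L) = a" "distinct (map (rtail N) L)"
    using las unfolding lasso_def by auto
  have D: "(\<exists>P. is_rpath N P a (sink N) \<and> {r. 0 < f r} = set P) \<or>
       (\<exists>C. is_rcycle N C \<and> a \<in> set (map (rtail N) C) \<and> sink N \<notin> set (map (rtail N) C) \<and>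
            {r. 0 < f r} = set C) \<or>
       (\<exists>C P w. is_rcycle N C \<and> a \<notin> set (map (rtail N) C) \<and> sink N \<notin> set (map (rtail N) C) \<and>
            w \<in> set (map (rtail N) C) \<and> is_rpath N P a w \<and>
            set (butlast (pverts N P)) \<inter> set (map (rtail N) C) = {} \<and>
            {r. 0 < f r} = set P \<union> set C)"
  proof (cases k)
    case None
    then have "rhead N (last L) = sink N" "sink N \<notin> set (map (rtail N) L)" using las unfolding lasso_def by auto
    then have "is_rpath N L a (sink N)" using L unfolding is_rpath_def pverts_def by auto
    then show ?thesis using S by blast
  next
    case (Some i)
    then have i: "i < length L" "rhead N (last L) = rtail N (L!i)" "sink N \<notin> set (map (rtail N) (drop i L))"
      using las unfolding lasso_def by auto
    show ?thesis
    proof (cases "i = 0")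
      case True
      have "is_rcycle N L" using L i True unfolding is_rcycle_def by (simp add: hd_conv_nth)
      moreover have "a \<in> set (map (rtail N) L)" using L by (cases L) auto
      ultimately show ?thesis using S i True by auto
    next
      case False
      define C where "C = drop i L"
      define P where "P = take i L"
      define w where "w = rtail N (L!i)"
      have Cne: "C \<noteq> []" using i C_def by auto
      have hdC: "hd C = L ! i" using i C_def by (simp add: hd_drop_conv_nth)
      have lastC: "last C = last L" using i C_def by simp
      have dm: "map (rtail N) C = drop i (map (rtail N) L)" unfolding C_def by (simp add: drop_map)
      have "rchain N C" unfolding C_def using L(2) by (rule rchain_drop)
      moreover have "distinct (map (rtail N) C)" unfolding dm using L(4) by simp
      moreover have "rhead N (last C) = rtail N (hd C)" using lastC hdC i by simp
      ultimately have "is_rcycle N C" unfolding is_rcycle_def using Cne by simp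
      moreover have "a \<notin> set (map (rtail N) C)"
      proof -
        have "a = map (rtail N) L ! 0" using L by (simp add: hd_conv_nth)
        then show ?thesis unfolding dm using distinct_nth_notin_drop[of "map (rtail N) L" 0 i] L(4) i False
          by simp
      qed
      moreover have "sink N \<notin> set (map (rtail N) C)" using i C_def by simp
      moreover have "w \<in> set (map (rtail N) C)" using hdC Cne w_def by (cases C) auto
      moreover have "is_rpath N P a w"
      proof -
        have Pne: "P \<noteq> []" using False L P_def by simp
        have hdP: "hd P = hd L" using False L P_def by simp
        have lP: "length P = i" using i P_def by simp
        have lastP: "last P = L ! (i - 1)"
        proof -
          have "last P = P ! (length P - 1)" using Pne by (simp add: last_conv_nth)
          also have "\<dots> = L ! (i - 1)" using lP False P_def by simp
          finally show ?thesis .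
        qed
        have "rhead N (L ! (i - 1)) = rtail N (L ! Suc (i - 1))" using L(2) i False
          unfolding rchain_nth by auto
        then have hl: "rhead N (last P) = w" using lastP False w_def by simp
        have "pverts N P = take i (map (rtail N) L) @ [map (rtail N) L ! i]"
          unfolding pverts_def using hl w_def i by (simp add: P_def take_map)
        moreover have "distinct (take i (map (rtail N) L) @ [map (rtail N) L ! i])"
          using L(4) i distinct_nth_notin_take[of "map (rtail N) L" i] by simp
        ultimately have "distinct (pverts N P)" by simp
        then show ?thesis unfolding is_rpath_def using Pne hdP L hl P_def
          by (simp add: rchain_take)
      qed
      moreover have "set (butlast (pverts N P)) \<inter> set (map (rtail N) C) = {}"
      proof -
        have "butlast (pverts N P) = take i (map (rtail N) L)" unfolding pverts_def by (simp add: P_def take_map)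
        then show ?thesis using L(4) set_take_disj_set_drop_if_distinct[of "map (rtail N) L" i i]
          by (simp add: C_def drop_map)
      qed
      moreover have "{r. 0 < f r} = set P \<union> set C" using S P_def C_def
        by (metis append_take_drop_id set_append)
      ultimately show ?thesis by blast
    qed
  qed
  show ?thesis unfolding aug_path_def Let_def using fr D by (rule conjI)
qed

definition closedc :: "'v redge list \<Rightarrow> bool" where
  "closedc C \<longleftrightarrow> C \<noteq> [] \<and> rchain N C \<and> rhead N (last C) = rtail N (hd C)"

lemma closedc_rotate1: assumes c: "closedc C" shows "closedc (rotate1 C)"
proof (cases C)
  case Nil then show ?thesis using c by simp
next
  case (Cons r rs)
  show ?thesis
  proof (cases "rs = []")
    case True then show ?thesis using c Cons by simp
  next
    case False
    have "rchain N rs" "rhead N r = rtail N (hd rs)" "rhead N (last rs) = rtail N r"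
      using c Cons False unfolding closedc_def by (auto simp: rchain_Cons)
    then show ?thesis using Cons False unfolding closedc_def by (simp add: rchain_append)
  qed
qed

lemma closedc_rotate: "closedc C \<Longrightarrow> closedc (rotate n C)"
proof (induction n)
  case 0 then show ?case by simp
next
  case (Suc n)
  then have "closedc (rotate n C)" by blast
  then have "closedc (rotate1 (rotate n C))" by (rule closedc_rotate1)
  then show ?case by simp
qed

lemma rotate_at:
  assumes "is_rcycle N C" "w \<in> set (map (rtail N) C)"
  shows "\<exists>C'. set C' = set C \<and> closedc C' \<and> rtail N (hd C') = w \<and> distinct (map (rtail N) C')
     \<and> set (map (rtail N) C') = set (map (rtail N) C)"
proof -
  obtain n where n: "n < length C" "rtail N (C ! n) = w" using assms(2) by (auto simp: in_set_conv_nth)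
  define C' where "C' = rotate n C"
  have cc: "closedc C" using assms(1) unfolding is_rcycle_def closedc_def by auto
  have "C \<noteq> []" using n by auto
  then have "hd C' = C ! n" using n C'_def by (simp add: hd_rotate_conv_nth)
  moreover have dC: "distinct (map (rtail N) C)" using assms(1) unfolding is_rcycle_def by simp
  moreover have mr: "map (rtail N) C' = rotate n (map (rtail N) C)" unfolding C'_def by (rule rotate_map[symmetric])
  moreover have "distinct (map (rtail N) C')" unfolding mr using dC by simp
  moreover have "set (map (rtail N) C') = set (map (rtail N) C)" unfolding mr by simp
  moreover have "set C' = set C" unfolding C'_def by simp
  moreover have "closedc C'" unfolding C'_def using closedc_rotate[OF cc] .
  ultimately have "set C' = set C \<and> closedc C' \<and> rtail N (hd C') = w \<and> distinct (map (rtail N) C')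
     \<and> set (map (rtail N) C') = set (map (rtail N) C)" using n by simp
  then show ?thesis by blast
qed

lemma aug_saug: assumes "aug_path N s T t x a f" shows "saug t x a f"
proof -
  have fr: "frac_aug_path N s T t x a f" using assms unfolding aug_path_def by auto
  then have inR: "\<And>r. 0 < f r \<Longrightarrow> r \<in> res_edges N s T t x" unfolding frac_aug_path_def by force
  have "\<exists>L k. lasso t x L a k \<and> {r. 0 < f r} = set L"
  proof -
    consider (P) P where "is_rpath N P a (sink N)" "{r. 0 < f r} = set P"
      | (C) C where "is_rcycle N C" "a \<in> set (map (rtail N) C)" "sink N \<notin> set (map (rtail N) C)"
            "{r. 0 < f r} = set C"
      | (BC) C P w where "is_rcycle N C" "a \<notin> set (map (rtail N) C)" "sink N \<notin> set (map (rtail N) C)"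
            "w \<in> set (map (rtail N) C)" "is_rpath N P a w"
            "set (butlast (pverts N P)) \<inter> set (map (rtail N) C) = {}"
            "{r. 0 < f r} = set P \<union> set C"
      using assms unfolding aug_path_def Let_def by blast
    then show ?thesis
    proof cases
      case P
      then have "set P \<subseteq> res_edges N s T t x" using inR by blast
      then have "lasso t x P a None" using P unfolding lasso_def is_rpath_def pverts_def by auto
      then show ?thesis using P by blast
    next
      case C
      obtain C' where C': "set C' = set C" "closedc C'" "rtail N (hd C') = a" "distinct (map (rtail N) C')"
        "set (map (rtail N) C') = set (map (rtail N) C)" using rotate_at[OF C(1,2)] by blast
      have "set C' \<subseteq> res_edges N s T t x" using inR C C' by blast
      then have "lasso t x C' a (Some 0)" using C C' unfolding lasso_def closedc_def
        by (auto simp: hd_conv_nth)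
      then show ?thesis using C C' by metis
    next
      case BC
      obtain C' where C': "set C' = set C" "closedc C'" "rtail N (hd C') = w" "distinct (map (rtail N) C')"
        "set (map (rtail N) C') = set (map (rtail N) C)" using rotate_at[OF BC(1,4)] by blast
      have Pp: "P \<noteq> []" "rchain N P" "rtail N (hd P) = a" "rhead N (last P) = w"
        "distinct (map (rtail N) P @ [w])" using BC(5) unfolding is_rpath_def pverts_def by auto
      have bl: "butlast (pverts N P) = map (rtail N) P" unfolding pverts_def by simp
      define L where "L = P @ C'"
      have Cne: "C' \<noteq> []" using C' unfolding closedc_def by auto
      have sL: "set L = {r. 0 < f r}" using BC(7) C'(1) L_def by auto
      have a1: "set L \<subseteq> res_edges N s T t x" unfolding sL using inR by blast
      have a2: "rchain N L" using Pp C' Cne unfolding L_def closedc_def by (simp add: rchain_append)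
      have a3: "distinct (map (rtail N) L)" using Pp C' BC(6) bl unfolding L_def by auto
      have a4: "L ! length P = hd C'" using Cne unfolding L_def by (cases C') auto
      have a5: "last L = last C'" using Cne L_def by simp
      have a6: "drop (length P) L = C'" using L_def by simp
      have a7: "L \<noteq> []" "rtail N (hd L) = a" "length P < length L" using Pp Cne L_def by auto
      have a8: "rhead N (last L) = rtail N (L ! length P)" using a4 a5 C' unfolding closedc_def by simp
      have a9: "sink N \<notin> set (map (rtail N) (drop (length P) L))" using a6 C' BC(3) by simp
      have "lasso t x L a (Some (length P))" unfolding lasso_def using a1 a2 a3 a7 a8 a9 by simp
      moreover have "{r. 0 < f r} = set L" using sL by simp
      ultimately show ?thesis by blast
    qed
  qed
  then show ?thesis using fr unfolding saug_def by blast
qed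

lemma sum_single: "finite A \<Longrightarrow> e \<in> A \<Longrightarrow> (\<And>r. r \<in> A \<Longrightarrow> r \<noteq> e \<Longrightarrow> f r = 0) \<Longrightarrow> sum f A = f e"
  by (metis (mono_tags, lifting) sum.remove sum.neutral DiffE insertCI add.right_neutral)

lemma exc_diff: "exc t x (\<lambda>q. f q - g q) w = exc t x f w - exc t x g w"
  unfolding exc_def by (simp add: algebra_simps sum_subtractf)

lemma distinct_map_nth_eq: "distinct (map g L) \<Longrightarrow> i < length L \<Longrightarrow> j < length L \<Longrightarrow> g (L!i) = g (L!j) \<Longrightarrow> i = j"
  using nth_eq_iff_index_eq[of "map g L" i j] by simp

lemma step1:
  assumes an: "a \<noteq> sink N" and fr: "frac_aug_path N s T t x a h" and las: "lasso t x L a k"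
    and S: "{r. 0 < h r} = set L" and Le: "L = e1 # L'" and nt: "\<not> (k = None \<and> L' = [])"
  shows "\<exists>h1 L1 k1. (\<forall>q. h q = (if q = e1 then 1 else 0) + rgain N e1 * h1 q) \<and>
     frac_aug_path N s T t x (rhead N e1) h1 \<and> lasso t x L1 (rhead N e1) k1 \<and> {r. 0 < h1 r} = set L1 \<and>
     set (map (rtail N) L1) \<subseteq> set (map (rtail N) L) \<and> length L' \<le> length L1 \<and>
     (\<forall>j < length L'. L1 ! j = L' ! j)"
proof -
  have Lp: "set L \<subseteq> res_edges N s T t x" "rchain N L" "rtail N (hd L) = a" "distinct (map (rtail N) L)"
    using las unfolding lasso_def by auto
  have e1R: "e1 \<in> res_edges N s T t x" using Lp Le by auto
  have g1: "0 < rgain N e1" using res_props(3)[OF e1R] .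
  have ta: "rtail N e1 = a" using Lp Le by simp
  have aV: "a \<in> verts_at N s T t" using res_props(1)[OF e1R] ta by simp
  have hnn: "\<And>r. 0 \<le> h r" and hR: "\<And>r. h r \<noteq> 0 \<Longrightarrow> r \<in> res_edges N s T t x"
    and hc: "\<And>w. w \<in> verts_at N s T t - {sink N} \<Longrightarrow> exc t x h w = (if w = a then 1 else 0)"
    using fr unfolding frac_iff by auto
  have supp: "\<And>r. h r \<noteq> 0 \<Longrightarrow> r \<in> set L" using hnn S by (metis less_eq_real_def mem_Collect_eq)
  have ea: "exc t x h a = 1" using hc[of a] aV an by simp
  have finR: "finite (res_edges N s T t x)" by (rule fin_res)
  have out: "(\<Sum>r\<in>{r \<in> res_edges N s T t x. rtail N r = a}. h r) = h e1"
  proof (rule sum_single)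
    show "finite {r \<in> res_edges N s T t x. rtail N r = a}" using finR by simp
    show "e1 \<in> {r \<in> res_edges N s T t x. rtail N r = a}" using e1R ta by simp
    fix r assume r: "r \<in> {r \<in> res_edges N s T t x. rtail N r = a}" "r \<noteq> e1"
    show "h r = 0"
    proof (rule ccontr)
      assume "h r \<noteq> 0"
      then have "r \<in> set L" by (rule supp)
      then obtain j where j: "j < length L" "L ! j = r" by (auto simp: in_set_conv_nth)
      have "rtail N (L ! j) = rtail N (L ! 0)" using j r ta Le by simp
      then have "j = 0" using distinct_map_nth_eq[OF Lp(4) j(1), of 0] Le by simp
      then show False using j r Le by simp
    qed
  qed
  define ins where "ins = (\<Sum>r\<in>{r \<in> res_edges N s T t x. rhead N r = a}. rgain N r * h r)"
  have ins_nn: "0 \<le> ins" unfolding ins_def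
  proof (rule sum_nonneg)
    fix r assume "r \<in> {r \<in> res_edges N s T t x. rhead N r = a}"
    then have "0 < rgain N r" using res_props(3)[of r t x] by simp
    then show "0 \<le> rgain N r * h r" using hnn[of r] by simp
  qed
  have he1: "h e1 = 1 + ins" using ea out unfolding exc_def ins_def by simp
  have headin: "\<And>j. j < length L \<Longrightarrow> rhead N (L ! j) = a \<Longrightarrow> Suc j = length L \<and> k = Some 0"
  proof -
    fix j assume j: "j < length L" "rhead N (L ! j) = a"
    show "Suc j = length L \<and> k = Some 0"
    proof (cases "Suc j < length L")
      case True
      then have "rhead N (L ! j) = rtail N (L ! Suc j)" using Lp(2) unfolding rchain_nth by auto
      then have "rtail N (L ! Suc j) = rtail N (L ! 0)" using j ta Le by simp
      then have "Suc j = 0" using distinct_map_nth_eq[OF Lp(4) True, of 0] Le by simp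
      then show ?thesis by simp
    next
      case False
      then have sj: "Suc j = length L" using j by simp
      then have lj: "last L = L ! j" using Le by (simp add: last_conv_nth)
      show ?thesis
      proof (cases k)
        case None
        then have "rhead N (last L) = sink N" using las unfolding lasso_def by simp
        then show ?thesis using lj j an by simp
      next
        case (Some i)
        then have i: "i < length L" "rhead N (last L) = rtail N (L ! i)" using las unfolding lasso_def by auto
        then have "rtail N (L ! i) = rtail N (L ! 0)" using lj j ta Le by simp
        then have "i = 0" using distinct_map_nth_eq[OF Lp(4) i(1), of 0] Le by simp
        then show ?thesis using sj Some by simp
      qed
    qed
  qed
  define h1 where "h1 = (\<lambda>q. (h q - (if q = e1 then 1 else 0)) / rgain N e1)"
  have id: "\<forall>q. h q = (if q = e1 then 1 else 0) + rgain N e1 * h1 q"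
    using g1 unfolding h1_def by auto
  have h1nn: "\<And>q. 0 \<le> h1 q" unfolding h1_def using he1 ins_nn hnn g1 by auto
  have h1R: "\<And>q. h1 q \<noteq> 0 \<Longrightarrow> q \<in> res_edges N s T t x"
    unfolding h1_def using hR e1R by (auto split: if_splits)
  have h1c: "\<And>w. w \<in> verts_at N s T t - {sink N} \<Longrightarrow> exc t x h1 w = (if w = rhead N e1 then 1 else 0)"
  proof -
    fix w assume w: "w \<in> verts_at N s T t - {sink N}"
    have "exc t x h1 w = (exc t x h w - exc t x (\<lambda>q. if q = e1 then 1 else 0) w) / rgain N e1"
      unfolding h1_def using exc_scale[of t x "\<lambda>q. h q - (if q = e1 then 1 else 0)" "rgain N e1" w]
        exc_diff[of t x h "\<lambda>q. if q = e1 then 1 else 0" w] by simp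
    also have "\<dots> = (if w = rhead N e1 then 1 else 0)"
      using hc[OF w] exc_ind[OF e1R, of w] ta g1 by auto
    finally show "exc t x h1 w = (if w = rhead N e1 then 1 else 0)" .
  qed
  have fr1: "frac_aug_path N s T t x (rhead N e1) h1" unfolding frac_iff using h1nn h1R h1c by blast
  have e1nL': "e1 \<notin> set L'" using Lp(4) Le by auto
  have chL': "rchain N L'" and hdL': "L' \<noteq> [] \<Longrightarrow> rtail N (hd L') = rhead N e1"
    using Lp(2) Le by (auto simp: rchain_Cons)
  have dL': "distinct (map (rtail N) L')" using Lp(4) Le by simp
  show ?thesis
  proof (cases "k = Some 0")
    case False
    have insz: "ins = 0" unfolding ins_def
    proof (rule sum.neutral, rule ballI)
      fix r assume r: "r \<in> {r \<in> res_edges N s T t x. rhead N r = a}"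
      show "rgain N r * h r = 0"
      proof (cases "h r = 0")
        case False
        then have "r \<in> set L" by (rule supp)
        then obtain j where j: "j < length L" "L ! j = r" by (auto simp: in_set_conv_nth)
        then show ?thesis using headin[OF j(1)] r \<open>k \<noteq> Some 0\<close> by auto
      qed simp
    qed
    then have he1': "h e1 = 1" using he1 by simp
    have S1: "{r. 0 < h1 r} = set L'"
    proof -
      have "\<And>q. (0 < h1 q) = (q \<in> set L')"
      proof -
        fix q show "(0 < h1 q) = (q \<in> set L')"
        proof (cases "q = e1")
          case True then show ?thesis using he1' e1nL' unfolding h1_def by simp
        next
          case False
          have "(0 < h1 q) = (0 < h q)" unfolding h1_def using False g1 by (simp add: zero_less_divide_iff)
          also have "\<dots> = (q \<in> set L)" using S by auto
          finally show ?thesis using False Le by simp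
        qed
      qed
      then show ?thesis by auto
    qed
    have L'ne: "L' \<noteq> []"
    proof
      assume L'e: "L' = []"
      then obtain i where "k = Some i" using nt by (cases k) auto
      then have "i < length L" using las unfolding lasso_def by simp
      then show False using L'e Le \<open>k = Some i\<close> False by simp
    qed
    have lastL: "last L = last L'" using Le L'ne by simp
    have "lasso t x L' (rhead N e1) (case k of None \<Rightarrow> None | Some i \<Rightarrow> Some (i - 1))"
    proof (cases k)
      case None
      then show ?thesis using las L'ne chL' hdL' dL' lastL Lp(1) Le unfolding lasso_def by auto
    next
      case (Some i)
      then have i: "i < length L" "rhead N (last L) = rtail N (L ! i)" "sink N \<notin> set (map (rtail N) (drop i L))"
        using las unfolding lasso_def by auto
      have i0: "i \<noteq> 0" using Some False by simp
      then have "L ! i = L' ! (i - 1)" using Le by (cases i) auto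
      moreover have "drop i L = drop (i - 1) L'" using Le i0 by (cases i) auto
      ultimately show ?thesis using Some i i0 L'ne chL' hdL' dL' lastL Lp(1) Le unfolding lasso_def by auto
    qed
    moreover have "set (map (rtail N) L') \<subseteq> set (map (rtail N) L)" using Le by auto
    ultimately show ?thesis using id fr1 S1 by blast
  next
    case True
    have L'ne: "L' \<noteq> []"
    proof
      assume L'e: "L' = []"
      have "rhead N (last L) = rtail N (L ! 0)" using las True unfolding lasso_def by simp
      then have "rhead N e1 = rtail N e1" using L'e Le by simp
      then show False using res_props(5)[OF e1R] by simp
    qed
    define l where "l = last L"
    have lL: "l \<in> set L" "l \<noteq> e1" "rhead N l = a"
    proof -
      show "l \<in> set L" using Le l_def by simp
      have "rhead N l = rtail N (L ! 0)" using las True unfolding lasso_def l_def by simp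
      then show "rhead N l = a" using ta Le by simp
      show "l \<noteq> e1"
      proof
        assume "l = e1"
        then have "rhead N e1 = rtail N e1" using \<open>rhead N l = a\<close> ta by simp
        then show False using res_props(5)[OF e1R] by simp
      qed
    qed
    have lR: "l \<in> res_edges N s T t x" using lL Lp by auto
    have "rgain N l * h l \<le> ins" unfolding ins_def
    proof (rule member_le_sum)
      show "l \<in> {r \<in> res_edges N s T t x. rhead N r = a}" using lR lL by simp
      show "finite {r \<in> res_edges N s T t x. rhead N r = a}" using finR by simp
      fix r assume "r \<in> {r \<in> res_edges N s T t x. rhead N r = a} - {l}"
      then show "0 \<le> rgain N r * h r" using hnn res_props(3)[of r t x] by (simp add: less_imp_le)
    qed
    moreover have "0 < rgain N l * h l"
    proof -
      have "0 < h l" using lL(1) S by blast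
      then show ?thesis using res_props(3)[OF lR] by simp
    qed
    ultimately have he1': "1 < h e1" using he1 by simp
    have S1: "{r. 0 < h1 r} = set L"
    proof -
      have "\<And>q. (0 < h1 q) = (q \<in> set L)"
      proof -
        fix q show "(0 < h1 q) = (q \<in> set L)"
        proof (cases "q = e1")
          case True then show ?thesis using he1' g1 Le unfolding h1_def by simp
        next
          case False
          have "(0 < h1 q) = (0 < h q)" unfolding h1_def using False g1 by (simp add: zero_less_divide_iff)
          also have "\<dots> = (q \<in> set L)" using S by auto
          finally show ?thesis .
        qed
      qed
      then show ?thesis by auto
    qed
    define L1 where "L1 = L' @ [e1]"
    have c1: "rchain N L1"
    proof -
      have "rhead N (last L') = rtail N e1"
        using las True L'ne Le unfolding lasso_def by simp
      then show ?thesis using chL' L'ne unfolding L1_def by (simp add: rchain_append)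
    qed
    have "lasso t x L1 (rhead N e1) (Some 0)"
    proof -
      have "L1 \<noteq> []" "set L1 \<subseteq> res_edges N s T t x" using Lp Le L1_def by auto
      moreover have "rtail N (hd L1) = rhead N e1" using hdL' L'ne L1_def by simp
      moreover have "distinct (map (rtail N) L1)" using Lp(4) Le L1_def by auto
      moreover have "rhead N (last L1) = rtail N (L1 ! 0)" using hdL' L'ne L1_def by (cases L') auto
      moreover have "sink N \<notin> set (map (rtail N) L1)"
        using las True Le L1_def unfolding lasso_def by auto
      ultimately show ?thesis using c1 unfolding lasso_def by simp
    qed
    moreover have "{r. 0 < h1 r} = set L1" using S1 Le L1_def by auto
    moreover have "set (map (rtail N) L1) \<subseteq> set (map (rtail N) L)" using Le L1_def by auto
    moreover have "length L' \<le> length L1" "\<forall>j < length L'. L1 ! j = L' ! j"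
      using L1_def by (auto simp: nth_append)
    ultimately show ?thesis using id fr1 by blast
  qed
qed

lemma iter:
  assumes "i < length L" "\<forall>j<i. rtail N (L ! j) \<noteq> sink N" "frac_aug_path N s T t x a h"
    "lasso t x L a k" "{r. 0 < h r} = set L"
  shows "\<exists>h' L2 k2. (\<forall>q. h q = wflow (take i L) q + gprod (take i L) * h' q) \<and>
     frac_aug_path N s T t x (rtail N (L ! i)) h' \<and> lasso t x L2 (rtail N (L ! i)) k2 \<and>
     {r. 0 < h' r} = set L2 \<and> set (map (rtail N) L2) \<subseteq> set (map (rtail N) L)"
  using assms
proof (induction i arbitrary: h a L k)
  case 0
  have "L \<noteq> []" "rtail N (hd L) = a" using 0 unfolding lasso_def by auto
  then have "rtail N (L ! 0) = a" by (simp add: hd_conv_nth)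
  then show ?case using 0 by auto
next
  case (Suc i)
  obtain e1 L' where Le: "L = e1 # L'" using Suc.prems(1) by (cases L) auto
  have "rtail N (hd L) = a" using Suc.prems(4) unfolding lasso_def by auto
  then have a: "rtail N (L ! 0) = a" using Le by simp
  then have an: "a \<noteq> sink N" using Suc.prems(2) by auto
  have L'ne: "L' \<noteq> []" using Suc.prems(1) Le by auto
  obtain h1 L1 k1 where st: "\<forall>q. h q = (if q = e1 then 1 else 0) + rgain N e1 * h1 q"
     "frac_aug_path N s T t x (rhead N e1) h1" "lasso t x L1 (rhead N e1) k1" "{r. 0 < h1 r} = set L1"
     "set (map (rtail N) L1) \<subseteq> set (map (rtail N) L)" "length L' \<le> length L1"
     "\<forall>j < length L'. L1 ! j = L' ! j"
    using step1[OF an Suc.prems(3,4,5) Le] L'ne by blast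
  have il: "i < length L'" using Suc.prems(1) Le by simp
  have "\<forall>j<i. rtail N (L1 ! j) \<noteq> sink N"
  proof (intro allI impI)
    fix j assume "j < i"
    then have "L1 ! j = L ! Suc j" using st(7) il Le by simp
    then show "rtail N (L1 ! j) \<noteq> sink N" using Suc.prems(2) \<open>j < i\<close> by auto
  qed
  then obtain h' L2 k2 where ih: "\<forall>q. h1 q = wflow (take i L1) q + gprod (take i L1) * h' q"
     "frac_aug_path N s T t x (rtail N (L1 ! i)) h'" "lasso t x L2 (rtail N (L1 ! i)) k2"
     "{r. 0 < h' r} = set L2" "set (map (rtail N) L2) \<subseteq> set (map (rtail N) L1)"
    using Suc.IH[where L=L1 and h=h1 and a="rhead N e1" and k=k1] st(2,3,4) il st(6) by auto
  have tk: "take i L1 = take i L'"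
    using st(6,7) il by (intro nth_equalityI) auto
  have Li: "L1 ! i = L ! Suc i" using st(7) il Le by simp
  have "\<forall>q. h q = wflow (take (Suc i) L) q + gprod (take (Suc i) L) * h' q"
    using st(1) ih(1) tk Le by (simp add: algebra_simps)
  moreover have "set (map (rtail N) L2) \<subseteq> set (map (rtail N) L)" using ih(5) st(5) by blast
  ultimately show ?case using ih(2,3,4) Li by metis
qed

lemma height_le:
  assumes "a \<noteq> sink N" "aug_path N s T t x a f"
  shows "height N B s T t x a \<le> path_cost N B s T t x f"
proof -
  have "bdd_below (path_cost N B s T t x ` {f. aug_path N s T t x a f})"
  proof (rule bdd_belowI)
    fix c assume "c \<in> path_cost N B s T t x ` {f. aug_path N s T t x a f}"
    then obtain g where "aug_path N s T t x a g" "c = path_cost N B s T t x g" by auto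
    then show "0 \<le> c" using path_cost_nonneg unfolding aug_path_def frac_aug_path_def by auto
  qed
  then show ?thesis unfolding height_def using assms by (auto intro: cInf_lower)
qed

lemma wpath_aug:
  assumes "L \<noteq> []" "rchain N L" "set L \<subseteq> res_edges N s T t x" "rtail N (hd L) = a"
    "distinct (map (rtail N) L)" "rhead N (last L) = sink N" "sink N \<notin> set (map (rtail N) L)"
  shows "snice t x a (wflow L)"
proof -
  have fr: "frac_aug_path N s T t x a (wflow L)"
    unfolding frac_iff
  proof (intro conjI allI impI ballI)
    fix r show "0 \<le> wflow L r" using wflow_nonneg[OF assms(3)] .
  next
    fix r assume "wflow L r \<noteq> 0"
    then have "0 < wflow L r" using wflow_nonneg[OF assms(3), of r] by simp
    then show "r \<in> res_edges N s T t x" using wflow_pos_iff[OF assms(3)] assms(3) by auto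
  next
    fix w assume "w \<in> verts_at N s T t - {sink N}"
    then show "exc t x (wflow L) w = (if w = a then 1 else 0)"
      using exc_wflow[OF assms(1,2,3), of w] assms(4,6) by auto
  qed
  have "lasso t x L a None" unfolding lasso_def using assms by simp
  moreover have "{r. 0 < wflow L r} = set L" using wflow_pos_iff[OF assms(3)] by auto
  ultimately show ?thesis unfolding snice_def using fr assms(7) by blast
qed

lemma snice_saug: "snice t x a f \<Longrightarrow> saug t x a f"
  unfolding snice_def saug_def by blast

lemma reduce:
  assumes wn: "w \<noteq> sink N" and sa: "saug t x w h"
  shows "\<exists>h2. snice t x w h2 \<and> path_cost N B s T t x h2 \<le> path_cost N B s T t x h"
proof -
  obtain L k where fr: "frac_aug_path N s T t x w h" and las: "lasso t x L w k" and S: "{r. 0 < h r} = set L"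
    using sa unfolding saug_def by blast
  have Lp: "L \<noteq> []" "set L \<subseteq> res_edges N s T t x" "rchain N L" "rtail N (hd L) = w" "distinct (map (rtail N) L)"
    using las unfolding lasso_def by auto
  show ?thesis
  proof (cases "sink N \<in> set (map (rtail N) L)")
    case False
    then have "snice t x w h" unfolding snice_def using fr las S by blast
    then show ?thesis by blast
  next
    case True
    then obtain i0 where "i0 < length (map (rtail N) L)" "map (rtail N) L ! i0 = sink N"
      by (auto simp: in_set_conv_nth)
    then have ex: "\<exists>i. i < length L \<and> rtail N (L ! i) = sink N" by auto
    define i where "i = (LEAST i. i < length L \<and> rtail N (L ! i) = sink N)"
    have i: "i < length L" "rtail N (L ! i) = sink N" using LeastI_ex[OF ex] unfolding i_def by auto
    have bef: "\<forall>j<i. rtail N (L ! j) \<noteq> sink N" using i(1) not_less_Least unfolding i_def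
      by (metis (mono_tags, lifting) order.strict_trans)
    have i0: "i \<noteq> 0"
    proof
      assume "i = 0"
      then have "rtail N (hd L) = sink N" using i Lp(1) by (simp add: hd_conv_nth)
      then show False using Lp(4) wn by simp
    qed
    obtain h' L2 k2 where it: "\<forall>q. h q = wflow (take i L) q + gprod (take i L) * h' q"
       "frac_aug_path N s T t x (rtail N (L ! i)) h'"
      using iter[OF i(1) bef fr las S] by blast
    define W where "W = take i L"
    have Wp1: "W \<noteq> []" using i0 Lp(1) W_def by simp
    have Wp2: "rchain N W" using Lp(3) W_def by (simp add: rchain_take)
    have Wp3: "set W \<subseteq> res_edges N s T t x" using Lp(2) set_take_subset[of i L] W_def by blast
    have Wp4: "rtail N (hd W) = w" using Lp(1,4) i0 W_def by simp
    have Wp5: "distinct (map (rtail N) W)" using Lp(5) W_def by (simp add: take_map[symmetric])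
    note Wp = Wp1 Wp2 Wp3 Wp4 Wp5
    have lastW: "last W = L ! (i - 1)" using i0 i W_def Wp(1) by (simp add: last_conv_nth)
    have "rhead N (L ! (i - 1)) = rtail N (L ! Suc (i - 1))" using Lp(3) i i0 unfolding rchain_nth by auto
    then have hW: "rhead N (last W) = sink N" using lastW i i0 by simp
    have sW: "sink N \<notin> set (map (rtail N) W)"
    proof
      assume "sink N \<in> set (map (rtail N) W)"
      then obtain j where "j < length W" "rtail N (W ! j) = sink N" by (auto simp: in_set_conv_nth)
      then show False using bef W_def by auto
    qed
    have sn: "snice t x w (wflow W)" using wpath_aug[OF Wp(1,2,3,4,5) hW sW] .
    have hp: "h = (\<lambda>q. wflow W q + gprod W * h' q)" using it(1) W_def by auto
    have "path_cost N B s T t x h = wcost W + gprod W * path_cost N B s T t x h'"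
      unfolding hp path_cost_lin path_cost_wflow[OF Wp(3)] ..
    moreover have "0 \<le> path_cost N B s T t x h'" using it(2) path_cost_nonneg unfolding frac_iff by blast
    moreover have "0 < gprod W" using gprod_pos[OF Wp(3)] .
    ultimately have "path_cost N B s T t x (wflow W) \<le> path_cost N B s T t x h"
      using path_cost_wflow[OF Wp(3)] by simp
    then show ?thesis using sn by blast
  qed
qed

definition spath :: "nat \<Rightarrow> 'v flow \<Rightarrow> 'v redge list \<Rightarrow> 'v \<Rightarrow> 'v \<Rightarrow> bool" where
  "spath t x D u w \<longleftrightarrow> set D \<subseteq> res_edges N s T t x \<and> rchain N D \<and> u \<in> verts_at N s T t \<and>
     (D = [] \<longrightarrow> u = w) \<and> (D \<noteq> [] \<longrightarrow> rtail N (hd D) = u \<and> rhead N (last D) = w) \<and>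
     distinct (map (rtail N) D @ [w]) \<and> sink N \<notin> set (map (rtail N) D @ [w])"

lemma cycle_aug:
  assumes "C \<noteq> []" "rchain N C" "set C \<subseteq> res_edges N s T t x" "rtail N (hd C) = u"
    "distinct (map (rtail N) C)" "rhead N (last C) = u" "sink N \<notin> set (map (rtail N) C)"
    "gprod C < 1"
  shows "snice t x u (\<lambda>q. wflow C q / (1 - gprod C))"
proof -
  have p: "0 < 1 - gprod C" using assms(8) by simp
  have fr: "frac_aug_path N s T t x u (\<lambda>q. wflow C q / (1 - gprod C))"
    unfolding frac_iff
  proof (intro conjI allI impI ballI)
    fix r show "0 \<le> wflow C r / (1 - gprod C)" using wflow_nonneg[OF assms(3), of r] p by simp
  next
    fix r assume "wflow C r / (1 - gprod C) \<noteq> 0"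
    then have "0 < wflow C r" using wflow_nonneg[OF assms(3), of r] by (cases "wflow C r = 0") auto
    then show "r \<in> res_edges N s T t x" using wflow_pos_iff[OF assms(3)] assms(3) by auto
  next
    fix w assume "w \<in> verts_at N s T t - {sink N}"
    have "exc t x (\<lambda>q. wflow C q / (1 - gprod C)) w = exc t x (wflow C) w / (1 - gprod C)"
      by (rule exc_scale)
    also have "\<dots> = (if w = u then 1 else 0)"
      using exc_wflow[OF assms(1,2,3), of w] assms(4,6) p by auto
    finally show "exc t x (\<lambda>q. wflow C q / (1 - gprod C)) w = (if w = u then 1 else 0)" .
  qed
  have "lasso t x C u (Some 0)" unfolding lasso_def using assms by (simp add: hd_conv_nth)
  moreover have "{r. 0 < wflow C r / (1 - gprod C)} = set C"
    using wflow_pos_iff[OF assms(3)] p by (auto simp: zero_less_divide_iff)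
  ultimately show ?thesis unfolding snice_def using fr assms(7) by blast
qed

lemma arith_combine:
  fixes a1 g1 A G S H :: real
  assumes "0 < g1" "0 \<le> A" "0 \<le> S" "0 < G"
    "H \<le> a1 + g1 * S" "G < 1 \<Longrightarrow> H \<le> a1 + g1 * (A / (1 - G))"
  shows "H \<le> a1 + g1 * (A + G * S)"
proof (cases "S \<le> A + G * S")
  case True
  then have "g1 * S \<le> g1 * (A + G * S)" using assms(1) by simp
  then show ?thesis using assms(5) by simp
next
  case False
  then have lt: "A < S * (1 - G)" by (simp add: algebra_simps)
  then have G1: "G < 1"
  proof -
    have "0 < S * (1 - G)" using lt assms(2) by simp
    then show ?thesis using assms(3) by (simp add: zero_less_mult_iff)
  qed
  then have p: "0 < 1 - G" by simp
  have q: "A / (1 - G) < S" using lt p by (simp add: divide_less_eq mult.commute)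
  have "A / (1 - G) = A + G * (A / (1 - G))" using p by (simp add: field_simps)
  also have "\<dots> \<le> A + G * S" using mult_left_mono[OF less_imp_le[OF q], of G] assms(4) by simp
  finally have le: "A / (1 - G) \<le> A + G * S" .
  have "g1 * (A / (1 - G)) \<le> g1 * (A + G * S)" by (rule mult_left_mono[OF le]) (use assms(1) in simp)
  then show ?thesis using assms(6)[OF G1] by linarith
qed

lemma lemmaM:
  assumes "spath t x D u w" "snice t x w h"
  shows "height N B s T t x u \<le> wcost D + gprod D * path_cost N B s T t x h"
  using assms
proof (induction "length D" arbitrary: D u w h rule: less_induct)
  case less
  obtain L k where fr: "frac_aug_path N s T t x w h" and las: "lasso t x L w k"
    and sL: "sink N \<notin> set (map (rtail N) L)" and S: "{r. 0 < h r} = set L"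
    using less.prems(2) unfolding snice_def by blast
  have Lp: "L \<noteq> []" "set L \<subseteq> res_edges N s T t x" "rchain N L" "rtail N (hd L) = w" "distinct (map (rtail N) L)"
    using las unfolding lasso_def by auto
  have Dp: "set D \<subseteq> res_edges N s T t x" "rchain N D" "u \<in> verts_at N s T t"
     "D = [] \<Longrightarrow> u = w" "D \<noteq> [] \<Longrightarrow> rtail N (hd D) = u" "D \<noteq> [] \<Longrightarrow> rhead N (last D) = w"
     "distinct (map (rtail N) D @ [w])" "sink N \<notin> set (map (rtail N) D @ [w])"
    using less.prems(1) unfolding spath_def by auto
  have wn: "w \<noteq> sink N" using Dp(8) by auto
  have un: "u \<noteq> sink N" using Dp(4,5,8) wn by (cases D) auto
  have hnn: "\<And>q. 0 \<le> h q" using fr unfolding frac_iff by blast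
  show ?case
  proof (cases "D = []")
    case True
    then have "height N B s T t x u \<le> path_cost N B s T t x h"
      using height_le[OF un] saug_aug[OF snice_saug[OF less.prems(2)]] Dp(4) by simp
    then show ?thesis using True by simp
  next
    case Dne: False
    define J where "J = {j. j < length D \<and> rtail N (D ! j) \<in> set (map (rtail N) L)}"
    have finJ: "finite J" unfolding J_def by simp
    show ?thesis
    proof (cases "J = {}")
      case True
      define g where "g = (\<lambda>q. wflow D q + gprod D * h q)"
      have gD: "0 < gprod D" using gprod_pos[OF Dp(1)] .
      have frg: "frac_aug_path N s T t x u g" unfolding frac_iff
      proof (intro conjI allI impI ballI)
        fix r show "0 \<le> g r" unfolding g_def using wflow_nonneg[OF Dp(1), of r] hnn[of r] gD by simp
      next
        fix r assume "g r \<noteq> 0"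
        then have "wflow D r \<noteq> 0 \<or> h r \<noteq> 0" unfolding g_def by auto
        then show "r \<in> res_edges N s T t x"
        proof
          assume "wflow D r \<noteq> 0"
          then have "0 < wflow D r" using wflow_nonneg[OF Dp(1), of r] by simp
          then show ?thesis using wflow_pos_iff[OF Dp(1)] Dp(1) by auto
        next
          assume "h r \<noteq> 0" then show ?thesis using fr unfolding frac_iff by blast
        qed
      next
        fix v assume v: "v \<in> verts_at N s T t - {sink N}"
        have "exc t x g v = exc t x (wflow D) v + gprod D * exc t x h v" unfolding g_def by (rule exc_lin)
        also have "\<dots> = (if v = u then 1 else 0)"
          using exc_wflow[OF Dne Dp(2,1), of v] Dp(5,6)[OF Dne] fr v unfolding frac_iff by auto
        finally show "exc t x g v = (if v = u then 1 else 0)" .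
      qed
      have Sg: "{r. 0 < g r} = set (D @ L)"
      proof -
        have "\<And>q. (0 < g q) = (q \<in> set D \<or> q \<in> set L)"
        proof -
          fix q
          have a: "0 \<le> wflow D q" using wflow_nonneg[OF Dp(1)] .
          have b: "0 \<le> gprod D * h q" using gD hnn[of q] by simp
          have "(0 < g q) = (0 < wflow D q \<or> 0 < gprod D * h q)" unfolding g_def using a b by auto
          also have "\<dots> = (q \<in> set D \<or> q \<in> set L)"
            using wflow_pos_iff[OF Dp(1)] S gD by (auto simp: zero_less_mult_iff)
          finally show "(0 < g q) = (q \<in> set D \<or> q \<in> set L)" .
        qed
        then show ?thesis by auto
      qed
      have disj: "set (map (rtail N) D) \<inter> set (map (rtail N) L) = {}"
      proof (rule ccontr)
        assume "set (map (rtail N) D) \<inter> set (map (rtail N) L) \<noteq> {}"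
        then obtain z where z: "z \<in> set (map (rtail N) D)" "z \<in> set (map (rtail N) L)" by blast
        then obtain j where "j < length D" "map (rtail N) D ! j = z" by (auto simp: in_set_conv_nth)
        then have "j \<in> J" unfolding J_def using z(2) by simp
        then show False using True by simp
      qed
      have las2: "lasso t x (D @ L) u (map_option (\<lambda>i. i + length D) k)"
      proof -
        have c1: "D @ L \<noteq> []" "set (D @ L) \<subseteq> res_edges N s T t x" using Dp(1) Lp(1,2) by auto
        have c2: "rchain N (D @ L)" using Dp(2,6) Lp(3,4) Dne Lp(1) by (simp add: rchain_append)
        have c3: "rtail N (hd (D @ L)) = u" using Dp(5) Dne by simp
        have c4: "distinct (map (rtail N) (D @ L))" using Dp(7) Lp(5) disj by simp
        have c5: "sink N \<notin> set (map (rtail N) (D @ L))" using Dp(8) sL by simp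
        have ll: "last (D @ L) = last L" using Lp(1) by simp
        show ?thesis
        proof (cases k)
          case None
          then have "rhead N (last L) = sink N" using las unfolding lasso_def by simp
          then show ?thesis unfolding lasso_def using c1 c2 c3 c4 c5 ll None by simp
        next
          case (Some i)
          then have i: "i < length L" "rhead N (last L) = rtail N (L ! i)" using las unfolding lasso_def by auto
          have "(D @ L) ! (i + length D) = L ! i" by (simp add: nth_append)
          moreover have "sink N \<notin> set (map (rtail N) (drop (i + length D) (D @ L)))"
            using c5 set_drop_subset[of "i + length D" "D @ L"] by auto
          ultimately show ?thesis unfolding lasso_def using c1 c2 c3 c4 c5 ll Some i by simp
        qed
      qed
      have c5': "sink N \<notin> set (map (rtail N) (D @ L))" using Dp(8) sL by simp
      have "snice t x u g" unfolding snice_def using frg las2 Sg c5' by blast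
      then have "height N B s T t x u \<le> path_cost N B s T t x g"
        using height_le[OF un] saug_aug[OF snice_saug] by blast
      also have "\<dots> = wcost D + gprod D * path_cost N B s T t x h"
        unfolding g_def path_cost_lin path_cost_wflow[OF Dp(1)] ..
      finally show ?thesis .
    next
      case False
      define j where "j = Max J"
      have jJ: "j \<in> J" using Max_in[OF finJ False] j_def by simp
      have jmax: "\<And>m. m \<in> J \<Longrightarrow> m \<le> j" using Max_ge[OF finJ] j_def by simp
      have j: "j < length D" "rtail N (D ! j) \<in> set (map (rtail N) L)" using jJ unfolding J_def by auto
      define u' where "u' = rtail N (D ! j)"
      obtain i where i: "i < length L" "rtail N (L ! i) = u'"
        using j(2) u'_def by (auto simp: in_set_conv_nth)
      have dD: "distinct (map (rtail N) D)" using Dp(7) by simp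
      have u'w: "u' \<noteq> w"
      proof
        assume "u' = w"
        then have "w \<in> set (map (rtail N) D)" using j(1) u'_def nth_mem[of j D] by auto
        then show False using Dp(7) by simp
      qed
      have i0: "i \<noteq> 0"
      proof
        assume "i = 0"
        then have "rtail N (hd L) = u'" using i Lp(1) by (simp add: hd_conv_nth)
        then show False using Lp(4) u'w by simp
      qed
      have bef: "\<forall>m<i. rtail N (L ! m) \<noteq> sink N"
      proof (intro allI impI)
        fix m assume "m < i"
        then have "L ! m \<in> set L" using i(1) by simp
        then show "rtail N (L ! m) \<noteq> sink N" using sL by force
      qed
      obtain h' L2 k2 where it: "\<forall>q. h q = wflow (take i L) q + gprod (take i L) * h' q"
         "frac_aug_path N s T t x u' h'" "lasso t x L2 u' k2" "{r. 0 < h' r} = set L2"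
         "set (map (rtail N) L2) \<subseteq> set (map (rtail N) L)"
        using iter[OF i(1) bef fr las S] i(2) by metis
      have sn': "snice t x u' h'" unfolding snice_def using it(2,3,4,5) sL by blast
      define W where "W = take i L"
      define D1 where "D1 = take j D"
      define D2 where "D2 = drop j D"
      have DD: "D = D1 @ D2" unfolding D1_def D2_def by simp
      have D2ne: "D2 \<noteq> []" using j(1) D2_def by simp
      have Wne: "W \<noteq> []" using i0 Lp(1) W_def by simp
      have WR: "set W \<subseteq> res_edges N s T t x" using Lp(2) set_take_subset[of i L] W_def by blast
      have D1R: "set D1 \<subseteq> res_edges N s T t x" using Dp(1) set_take_subset[of j D] D1_def by blast
      have D2R: "set D2 \<subseteq> res_edges N s T t x" using Dp(1) set_drop_subset[of j D] D2_def by blast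
      have hp: "h = (\<lambda>q. wflow W q + gprod W * h' q)" using it(1) W_def by auto
      have ch: "path_cost N B s T t x h = wcost W + gprod W * path_cost N B s T t x h'"
        unfolding hp path_cost_lin path_cost_wflow[OF WR] ..
      define C where "C = D2 @ W"
      have goal_eq: "wcost D + gprod D * path_cost N B s T t x h =
          wcost D1 + gprod D1 * (wcost C + gprod C * path_cost N B s T t x h')"
        unfolding DD C_def ch wcost_append gprod_simps by (simp add: algebra_simps)
      have sp1: "spath t x D1 u u'"
      proof -
        have "D1 = [] \<longrightarrow> u = u'"
        proof
          assume "D1 = []"
          then have "j = 0" using D1_def Dne by simp
          then show "u = u'" using Dp(5)[OF Dne] u'_def Dne by (simp add: hd_conv_nth)
        qed
        moreover have "D1 \<noteq> [] \<longrightarrow> rtail N (hd D1) = u \<and> rhead N (last D1) = u'"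
        proof
          assume D1ne: "D1 \<noteq> []"
          then have j0: "j \<noteq> 0" using D1_def by auto
          have "hd D1 = hd D" using D1ne D1_def by (cases D) auto
          moreover have "last D1 = D ! (j - 1)" using D1ne D1_def j(1) by (simp add: last_conv_nth)
          moreover have "rhead N (D ! (j - 1)) = rtail N (D ! Suc (j - 1))"
            using Dp(2) j(1) j0 unfolding rchain_nth by auto
          ultimately show "rtail N (hd D1) = u \<and> rhead N (last D1) = u'"
            using Dp(5)[OF Dne] j0 u'_def by simp
        qed
        moreover have "distinct (map (rtail N) D1 @ [u'])"
          using dD distinct_nth_notin_take[of "map (rtail N) D" j] j(1) u'_def
          by (simp add: D1_def take_map[symmetric])
        moreover have "sink N \<notin> set (map (rtail N) D1 @ [u'])"
        proof -
          have "set (map (rtail N) D1) \<subseteq> set (map (rtail N) D)" using D1_def set_take_subset[of j D] by auto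
          moreover have "u' \<in> set (map (rtail N) D)" using j(1) u'_def nth_mem[of j D] by auto
          ultimately show ?thesis using Dp(8) by auto
        qed
        ultimately show ?thesis unfolding spath_def using D1R Dp(2,3) D1_def by (simp add: rchain_take)
      qed
      have lenD1: "length D1 < length D" using D1_def j(1) by simp
      have IH1: "height N B s T t x u \<le> wcost D1 + gprod D1 * path_cost N B s T t x h'"
        using less.hyps[OF lenD1 sp1 sn'] .
      have CR: "set C \<subseteq> res_edges N s T t x" using D2R WR C_def by auto
      have Cne: "C \<noteq> []" using D2ne C_def by simp
      have lastD2: "last D2 = last D" using D2ne DD by simp
      have hdW: "hd W = hd L" using Wne W_def by simp
      have Cch: "rchain N C"
        using Dp(2) Lp(3) lastD2 Dp(6)[OF Dne] hdW Lp(4) D2ne Wne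
        unfolding C_def D2_def W_def by (simp add: rchain_append rchain_drop rchain_take)
      have hdC: "rtail N (hd C) = u'" using D2ne j(1) u'_def unfolding C_def D2_def by (simp add: hd_drop_conv_nth)
      have lastW: "last W = L ! (i - 1)" using Wne W_def i(1) by (simp add: last_conv_nth)
      have "rhead N (L ! (i - 1)) = rtail N (L ! Suc (i - 1))" using Lp(3) i(1) i0 unfolding rchain_nth by auto
      then have lastC: "rhead N (last C) = u'" using lastW i0 i(2) Wne unfolding C_def by simp
      have sC: "sink N \<notin> set (map (rtail N) C)"
      proof -
        have "set (map (rtail N) D2) \<subseteq> set (map (rtail N) D)" using D2_def set_drop_subset[of j D] by auto
        moreover have "set (map (rtail N) W) \<subseteq> set (map (rtail N) L)" using W_def set_take_subset[of i L] by auto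
        ultimately show ?thesis using Dp(8) sL C_def by auto
      qed
      have dC: "distinct (map (rtail N) C)"
      proof -
        have m2: "map (rtail N) D2 = drop j (map (rtail N) D)" unfolding D2_def by (simp add: drop_map)
        have mW: "map (rtail N) W = take i (map (rtail N) L)" unfolding W_def by (simp add: take_map)
        have "set (drop j (map (rtail N) D)) \<inter> set (take i (map (rtail N) L)) = {}"
        proof (rule ccontr)
          assume "set (drop j (map (rtail N) D)) \<inter> set (take i (map (rtail N) L)) \<noteq> {}"
          then obtain z where z1: "z \<in> set (drop j (map (rtail N) D))" and z2: "z \<in> set (take i (map (rtail N) L))"
            by blast
          from z1 obtain m where m: "m < length D - j" "z = rtail N (D ! (j + m))"
            by (auto simp: in_set_conv_nth)
          have zL: "z \<in> set (map (rtail N) L)" using z2 set_take_subset by fastforce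
          show False
          proof (cases "m = 0")
            case True
            then have "z = rtail N (L ! i)" using m(2) i(2) u'_def by simp
            then have "z = map (rtail N) L ! i" using i(1) by simp
            then show False using z2 distinct_nth_notin_take[OF Lp(5), of i] i(1) by simp
          next
            case False
            have "j + m \<in> J" using m zL unfolding J_def by simp
            then show False using jmax[of "j+m"] False by simp
          qed
        qed
        then show ?thesis unfolding C_def using m2 mW dD Lp(5) by (simp add: distinct_drop)
      qed
      have gC: "0 < gprod C" using gprod_pos[OF CR] .
      have wC: "0 \<le> wcost C" using wcost_nonneg[OF CR] .
      have ph': "0 \<le> path_cost N B s T t x h'" using it(2) path_cost_nonneg unfolding frac_iff by blast
      have IH2: "gprod C < 1 \<Longrightarrow>
          height N B s T t x u \<le> wcost D1 + gprod D1 * (wcost C / (1 - gprod C))"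
      proof -
        assume lt: "gprod C < 1"
        have sc: "snice t x u' (\<lambda>q. wflow C q / (1 - gprod C))"
          using cycle_aug[OF Cne Cch CR hdC dC lastC sC lt] .
        have "height N B s T t x u \<le> wcost D1 + gprod D1 * path_cost N B s T t x (\<lambda>q. wflow C q / (1 - gprod C))"
          using less.hyps[OF lenD1 sp1 sc] .
        also have "path_cost N B s T t x (\<lambda>q. wflow C q / (1 - gprod C)) = wcost C / (1 - gprod C)"
          using path_cost_scale path_cost_wflow[OF CR] by simp
        finally show ?thesis .
      qed
      have "height N B s T t x u \<le> wcost D1 + gprod D1 * (wcost C + gprod C * path_cost N B s T t x h')"
        using arith_combine[OF gprod_pos[OF D1R] wC ph' gC IH1 IH2] .
      then show ?thesis using goal_eq by simp
    qed
  qed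
qed

lemma finV: "finite (verts_at N s T t)"
  using inst_parts(1) unfolding verts_at_def by simp

lemma dummy_aug:
  assumes "a \<in> verts_at N s T t" "a \<noteq> sink N"
  shows "aug_path N s T t x a (wflow [(Inr a, True)])"
proof -
  have r0: "(Inr a, True) \<in> res_edges N s T t x"
    using assms unfolding res_edges_def edges_at_def below_cap_def by auto
  have "snice t x a (wflow [(Inr a, True)])"
    by (rule wpath_aug) (use r0 assms in \<open>auto simp: rtail_def rhead_def tailE_def headE_def\<close>)
  then show ?thesis using saug_aug snice_saug by blast
qed

lemma height_nonneg:
  assumes "a \<in> verts_at N s T t"
  shows "0 \<le> height N B s T t x a"
proof (cases "a = sink N")
  case True then show ?thesis unfolding height_def by simp
next
  case False
  have ne: "path_cost N B s T t x ` {f. aug_path N s T t x a f} \<noteq> {}"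
    using dummy_aug[OF assms False] by blast
  have "0 \<le> Inf (path_cost N B s T t x ` {f. aug_path N s T t x a f})"
  proof (rule cInf_greatest[OF ne])
    fix c assume "c \<in> path_cost N B s T t x ` {f. aug_path N s T t x a f}"
    then obtain g where "aug_path N s T t x a g" "c = path_cost N B s T t x g" by auto
    then show "0 \<le> c" using path_cost_nonneg unfolding aug_path_def frac_aug_path_def by auto
  qed
  then show ?thesis unfolding height_def using False by simp
qed

lemma height_greatest:
  assumes "a \<in> verts_at N s T t" "a \<noteq> sink N" "\<And>f. aug_path N s T t x a f \<Longrightarrow> z \<le> path_cost N B s T t x f"
  shows "z \<le> height N B s T t x a"
proof -
  have ne: "path_cost N B s T t x ` {f. aug_path N s T t x a f} \<noteq> {}"
    using dummy_aug[OF assms(1,2)] by blast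
  have "z \<le> Inf (path_cost N B s T t x ` {f. aug_path N s T t x a f})"
    by (rule cInf_greatest[OF ne]) (use assms(3) in auto)
  then show ?thesis unfolding height_def using assms(2) by simp
qed

lemma bellman:
  assumes r: "r \<in> res_edges N s T t x"
  shows "height N B s T t x (rtail N r) \<le> rcost N B r + rgain N r * height N B s T t x (rhead N r)"
proof -
  define u where "u = rtail N r"
  define w where "w = rhead N r"
  have uV: "u \<in> verts_at N s T t" and wV: "w \<in> verts_at N s T t" and g: "0 < rgain N r"
    and c: "0 \<le> rcost N B r" and uw: "u \<noteq> w"
    using res_props[OF r] u_def w_def by auto
  have hw: "0 \<le> height N B s T t x w" using height_nonneg[OF wV] .
  show ?thesis
  proof (cases "u = sink N")
    case True
    then have "height N B s T t x u = 0" unfolding height_def by simp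
    then show ?thesis using hw g c u_def w_def by simp
  next
    case un: False
    show ?thesis
    proof (cases "w = sink N")
      case True
      have "snice t x u (wflow [r])"
        by (rule wpath_aug) (use r True un u_def w_def in auto)
      then have "height N B s T t x u \<le> path_cost N B s T t x (wflow [r])"
        using height_le[OF un] saug_aug snice_saug by blast
      also have "\<dots> = rcost N B r" using path_cost_wflow[of "[r]"] r by simp
      finally have "height N B s T t x u \<le> rcost N B r" .
      moreover have "height N B s T t x w = 0" using True unfolding height_def by simp
      ultimately show ?thesis using u_def w_def by simp
    next
      case wn: False
      have sp: "spath t x [r] u w" unfolding spath_def using r uV uw un wn u_def w_def by auto
      have "(height N B s T t x u - rcost N B r) / rgain N r \<le> height N B s T t x w"
      proof (rule height_greatest[OF wV wn])
        fix f assume "aug_path N s T t x w f"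
        then obtain h2 where h2: "snice t x w h2" "path_cost N B s T t x h2 \<le> path_cost N B s T t x f"
          using reduce[OF wn aug_saug] by blast
        have "height N B s T t x u \<le> wcost [r] + gprod [r] * path_cost N B s T t x h2"
          using lemmaM[OF sp h2(1)] .
        also have "\<dots> \<le> rcost N B r + rgain N r * path_cost N B s T t x f"
          using h2(2) g by simp
        finally show "(height N B s T t x u - rcost N B r) / rgain N r \<le> path_cost N B s T t x f"
          using g by (simp add: divide_le_eq mult.commute)
      qed
      then show ?thesis using g u_def w_def by (simp add: divide_le_eq mult.commute)
    qed
  qed
qed

lemma pot_identity:
  assumes fr: "frac_aug_path N s T t x a f" and aV: "a \<in> verts_at N s T t" and an: "a \<noteq> sink N"
    and ps: "\<pi> (sink N) = 0"
  shows "(\<Sum>r\<in>res_edges N s T t x. f r * (\<pi> (rtail N r) - rgain N r * \<pi> (rhead N r))) = \<pi> a"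
proof -
  let ?R = "res_edges N s T t x" and ?V = "verts_at N s T t"
  have fR: "finite ?R" by (rule fin_res)
  have fV: "finite ?V" by (rule finV)
  have tV: "rtail N ` ?R \<subseteq> ?V" and hV: "rhead N ` ?R \<subseteq> ?V" using res_props by auto
  have 1: "(\<Sum>r\<in>?R. f r * \<pi> (rtail N r)) = (\<Sum>v\<in>?V. \<pi> v * (\<Sum>r\<in>{r \<in> ?R. rtail N r = v}. f r))"
  proof -
    have "(\<Sum>r\<in>?R. f r * \<pi> (rtail N r)) = (\<Sum>v\<in>?V. \<Sum>r\<in>{r \<in> ?R. rtail N r = v}. f r * \<pi> (rtail N r))"
      by (rule sum.group[symmetric, OF fR fV tV])
    also have "\<dots> = (\<Sum>v\<in>?V. \<pi> v * (\<Sum>r\<in>{r \<in> ?R. rtail N r = v}. f r))"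
      by (rule sum.cong) (auto simp: sum_distrib_left mult.commute intro!: sum.cong)
    finally show ?thesis .
  qed
  have 2: "(\<Sum>r\<in>?R. f r * (rgain N r * \<pi> (rhead N r))) = (\<Sum>v\<in>?V. \<pi> v * (\<Sum>r\<in>{r \<in> ?R. rhead N r = v}. rgain N r * f r))"
  proof -
    have "(\<Sum>r\<in>?R. f r * (rgain N r * \<pi> (rhead N r))) = (\<Sum>v\<in>?V. \<Sum>r\<in>{r \<in> ?R. rhead N r = v}. f r * (rgain N r * \<pi> (rhead N r)))"
      by (rule sum.group[symmetric, OF fR fV hV])
    also have "\<dots> = (\<Sum>v\<in>?V. \<pi> v * (\<Sum>r\<in>{r \<in> ?R. rhead N r = v}. rgain N r * f r))"
      by (rule sum.cong) (auto simp: sum_distrib_left mult.commute mult.left_commute intro!: sum.cong)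
    finally show ?thesis .
  qed
  have "(\<Sum>r\<in>?R. f r * (\<pi> (rtail N r) - rgain N r * \<pi> (rhead N r)))
      = (\<Sum>r\<in>?R. f r * \<pi> (rtail N r)) - (\<Sum>r\<in>?R. f r * (rgain N r * \<pi> (rhead N r)))"
    by (simp add: right_diff_distrib sum_subtractf)
  also have "\<dots> = (\<Sum>v\<in>?V. \<pi> v * exc t x f v)"
    unfolding 1 2 exc_def by (simp add: right_diff_distrib sum_subtractf)
  also have "\<dots> = (\<Sum>v\<in>?V - {sink N}. \<pi> v * exc t x f v)"
    using ps sink_V[of t] fV by (simp add: sum.remove)
  also have "\<dots> = (\<Sum>v\<in>?V - {sink N}. \<pi> v * (if v = a then 1 else 0))"
    using fr unfolding frac_iff by (intro sum.cong) auto
  also have "\<dots> = \<pi> a" using aV an fV by (simp add: if_distrib cong: if_cong)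
  finally show ?thesis .
qed

lemma pot_gap:
  assumes fr: "frac_aug_path N s T t x a f" and aV: "a \<in> verts_at N s T t" and an: "a \<noteq> sink N"
    and ps: "\<pi> (sink N) = 0"
  shows "path_cost N B s T t x f - \<pi> a =
     (\<Sum>r\<in>res_edges N s T t x. f r * (rcost N B r + rgain N r * \<pi> (rhead N r) - \<pi> (rtail N r)))"
proof -
  have "(\<Sum>r\<in>res_edges N s T t x. f r * (rcost N B r + rgain N r * \<pi> (rhead N r) - \<pi> (rtail N r)))
     = path_cost N B s T t x f - (\<Sum>r\<in>res_edges N s T t x. f r * (\<pi> (rtail N r) - rgain N r * \<pi> (rhead N r)))"
    unfolding path_cost_def by (simp add: algebra_simps sum_subtractf sum.distrib)
  then show ?thesis using pot_identity[where \<pi>=\<pi>, OF assms] by simp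
qed

lemma pot_lb:
  assumes fr: "frac_aug_path N s T t x a f" and aV: "a \<in> verts_at N s T t" and an: "a \<noteq> sink N"
    and ps: "\<pi> (sink N) = 0"
    and feas: "\<And>r. r \<in> res_edges N s T t x \<Longrightarrow> \<pi> (rtail N r) \<le> rcost N B r + rgain N r * \<pi> (rhead N r)"
  shows "\<pi> a \<le> path_cost N B s T t x f"
proof -
  have "0 \<le> (\<Sum>r\<in>res_edges N s T t x. f r * (rcost N B r + rgain N r * \<pi> (rhead N r) - \<pi> (rtail N r)))"
    using fr feas unfolding frac_iff by (intro sum_nonneg mult_nonneg_nonneg) auto
  then show ?thesis using pot_gap[where \<pi>=\<pi>, OF fr aV an ps] by simp
qed

lemma src_V: assumes "t \<in> {1..T}" shows "s t \<in> verts_at N s T t" "s t \<noteq> sink N"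
proof -
  have st: "s t \<in> verts N" "s t \<noteq> sink N" using inst_parts(7)[OF assms] by auto
  have "s t \<notin> s ` {Suc t..T}"
  proof
    assume "s t \<in> s ` {Suc t..T}"
    then obtain i where i: "i \<in> {Suc t..T}" "s t = s i" by auto
    have "inj_on s {1..T}" using inst unfolding gnf_instance_def by simp
    then have "t = i" using i assms by (auto dest: inj_onD)
    then show False using i by simp
  qed
  then show "s t \<in> verts_at N s T t" "s t \<noteq> sink N" using st unfolding verts_at_def by auto
qed

lemma step_mono:
  assumes st: "alg_step N B s T t x x'" and tT: "t \<in> {1..T}"
  shows "\<forall>v\<in>verts_at N s T t. height N B s T t x v \<le> height N B s T t x' v"
proof -
  obtain f \<theta> where ch: "cheapest N B s T t x (s t) f" and th: "0 < \<theta>" and x': "x' = augment N x f \<theta>"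
    using st unfolding alg_step_def by blast
  define \<pi> where "\<pi> = height N B s T t x"
  define a where "a = s t"
  have aV: "a \<in> verts_at N s T t" and an: "a \<noteq> sink N" using src_V[OF tT] a_def by auto
  have af: "aug_path N s T t x a f" using ch a_def unfolding cheapest_def by simp
  have fr: "frac_aug_path N s T t x a f" using af unfolding aug_path_def by simp
  have fnn: "\<And>r. 0 \<le> f r" and fR: "\<And>r. f r \<noteq> 0 \<Longrightarrow> r \<in> res_edges N s T t x"
    using fr unfolding frac_iff by auto
  have ps: "\<pi> (sink N) = 0" unfolding \<pi>_def height_def by simp
  have feas: "\<And>r. r \<in> res_edges N s T t x \<Longrightarrow> \<pi> (rtail N r) \<le> rcost N B r + rgain N r * \<pi> (rhead N r)"
    unfolding \<pi>_def by (rule bellman)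
  have eq: "\<pi> a = path_cost N B s T t x f"
  proof (rule antisym)
    show "\<pi> a \<le> path_cost N B s T t x f" unfolding \<pi>_def by (rule height_le[OF an af])
    show "path_cost N B s T t x f \<le> \<pi> a" unfolding \<pi>_def
      by (rule height_greatest[OF aV an]) (use ch a_def in \<open>auto simp: cheapest_def\<close>)
  qed
  have tight: "\<And>r. r \<in> res_edges N s T t x \<Longrightarrow> 0 < f r \<Longrightarrow> \<pi> (rtail N r) = rcost N B r + rgain N r * \<pi> (rhead N r)"
  proof -
    fix r assume rR: "r \<in> res_edges N s T t x" and fp: "0 < f r"
    let ?g = "\<lambda>r. f r * (rcost N B r + rgain N r * \<pi> (rhead N r) - \<pi> (rtail N r))"
    have z: "(\<Sum>r\<in>res_edges N s T t x. ?g r) = 0" using pot_gap[where \<pi>=\<pi>, OF fr aV an ps] eq by simp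
    have nn: "\<And>r. r \<in> res_edges N s T t x \<Longrightarrow> 0 \<le> ?g r" using fnn feas by (simp add: mult_nonneg_nonneg)
    have iff: "((\<Sum>r\<in>res_edges N s T t x. ?g r) = 0) = (\<forall>r\<in>res_edges N s T t x. ?g r = 0)"
      by (rule sum_nonneg_eq_0_iff[OF fin_res[of t x]]) (rule nn)
    have "?g r = 0" using iff z rR by blast
    then show "\<pi> (rtail N r) = rcost N B r + rgain N r * \<pi> (rhead N r)"
      using fp feas[OF rR] by simp
  qed
  have feas': "\<And>r. r \<in> res_edges N s T t x' \<Longrightarrow> \<pi> (rtail N r) \<le> rcost N B r + rgain N r * \<pi> (rhead N r)"
  proof -
    fix r assume r': "r \<in> res_edges N s T t x'"
    show "\<pi> (rtail N r) \<le> rcost N B r + rgain N r * \<pi> (rhead N r)"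
    proof (cases "r \<in> res_edges N s T t x")
      case True then show ?thesis by (rule feas)
    next
      case False
      obtain e b where rb: "r = (e, b)" by force
      have eE: "e \<in> edges_at N s T t" using r' rb unfolding res_edges_def by auto
      have ge: "0 < gainE N e" "0 \<le> costE N B e" using edge_props[OF eE] by auto
      have x'e: "x' e = x e + \<theta> * f (e, True) - \<theta> * f (e, False) / gainE N e"
        using x' unfolding augment_def by simp
      show ?thesis
      proof (cases b)
        case True
        have "below_cap N x' e" "\<not> below_cap N x e" using r' False rb True eE unfolding res_edges_def by auto
        then obtain a0 where e0: "e = Inl a0" "x' e < cap N a0" "\<not> x e < cap N a0"
          unfolding below_cap_def by (cases e) auto
        then have "\<theta> * f (e, True) - \<theta> * f (e, False) / gainE N e < 0" using x'e by simp
        moreover have "0 \<le> \<theta> * f (e, True)" using th fnn by simp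
        ultimately have "0 < \<theta> * f (e, False) / gainE N e" by linarith
        then have fF: "0 < f (e, False)" using th ge by (simp add: zero_less_divide_iff zero_less_mult_iff)
        have rF: "(e, False) \<in> res_edges N s T t x" using fR fF by force
        have "\<pi> (headE N e) = (1 / gainE N e) * \<pi> (tailE e)"
          using tight[OF rF fF] by (simp add: rtail_def rhead_def rcost_def rgain_def)
        then have "\<pi> (tailE e) = gainE N e * \<pi> (headE N e)" using ge by simp
        then show ?thesis using rb True ge by (simp add: rtail_def rhead_def rcost_def rgain_def)
      next
        case bF: False
        have "0 < x' e" "\<not> 0 < x e" using r' False rb bF eE unfolding res_edges_def by auto
        then have "0 < \<theta> * f (e, True) - \<theta> * f (e, False) / gainE N e" using x'e by simp
        moreover have "0 \<le> \<theta> * f (e, False) / gainE N e" using th fnn ge by simp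
        ultimately have "0 < \<theta> * f (e, True)" by linarith
        then have fT: "0 < f (e, True)" using th by (simp add: zero_less_mult_iff)
        have rT: "(e, True) \<in> res_edges N s T t x" using fR fT by force
        have "\<pi> (tailE e) = costE N B e + gainE N e * \<pi> (headE N e)"
          using tight[OF rT fT] by (simp add: rtail_def rhead_def rcost_def rgain_def)
        then have "\<pi> (headE N e) \<le> 1 / gainE N e * \<pi> (tailE e)"
          using ge by (simp add: field_simps)
        then show ?thesis using rb bF by (simp add: rtail_def rhead_def rcost_def rgain_def)
      qed
    qed
  qed
  show ?thesis
  proof
    fix v assume vV: "v \<in> verts_at N s T t"
    show "height N B s T t x v \<le> height N B s T t x' v"
    proof (cases "v = sink N")
      case True then show ?thesis unfolding height_def by simp
    next
      case vn: False
      have "\<pi> v \<le> height N B s T t x' v"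
      proof (rule height_greatest[OF vV vn])
        fix g assume "aug_path N s T t x' v g"
        then have "frac_aug_path N s T t x' v g" unfolding aug_path_def by simp
        then show "\<pi> v \<le> path_cost N B s T t x' g"
          using pot_lb[where \<pi>=\<pi>, OF _ vV vn ps feas'] by blast
      qed
      then show ?thesis unfolding \<pi>_def .
    qed
  qed
qed

lemma run_mono:
  assumes "(alg_step N B s T t)\<^sup>*\<^sup>* x0 x'" "t \<in> {1..T}"
  shows "\<forall>v\<in>verts_at N s T t. height N B s T t x0 v \<le> height N B s T t x' v"
  using assms(1)
proof (induction rule: rtranclp_induct)
  case base then show ?case by simp
next
  case (step y z)
  then show ?case using step_mono[OF step(2) assms(2)] by force
qed

lemma arrival_mono:
  assumes tT: "t \<in> {1..T}" and vV: "v \<in> verts_at N s T (t - 1)"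
  shows "height N B s T (t - 1) y v \<le> height N B s T t (restrict_flow N s T (t - 1) y) v"
proof -
  define x0 where "x0 = restrict_flow N s T (t - 1) y"
  define \<pi> where "\<pi> = (\<lambda>v. if v \<in> verts_at N s T (t - 1) then height N B s T (t - 1) y v else 0)"
  have sub: "verts_at N s T (t - 1) \<subseteq> verts_at N s T t"
    using tT unfolding verts_at_def by auto
  have pnn: "\<And>v. 0 \<le> \<pi> v" unfolding \<pi>_def using height_nonneg by auto
  have ps: "\<pi> (sink N) = 0" unfolding \<pi>_def height_def by simp
  have feas: "\<And>r. r \<in> res_edges N s T t x0 \<Longrightarrow> \<pi> (rtail N r) \<le> rcost N B r + rgain N r * \<pi> (rhead N r)"
  proof -
    fix r assume r: "r \<in> res_edges N s T t x0"
    obtain e b where rb: "r = (e, b)" by force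
    have eE: "e \<in> edges_at N s T t" using r rb unfolding res_edges_def by auto
    have gc: "0 < rgain N r" "0 \<le> rcost N B r" using res_props[OF r] by auto
    show "\<pi> (rtail N r) \<le> rcost N B r + rgain N r * \<pi> (rhead N r)"
    proof (cases "e \<in> edges_at N s T (t - 1)")
      case True
      have xe: "x0 e = y e" using True x0_def unfolding restrict_flow_def by simp
      have bc: "below_cap N x0 e = below_cap N y e" unfolding below_cap_def using xe by (cases e) auto
      have r1: "r \<in> res_edges N s T (t - 1) y" using r rb True xe bc unfolding res_edges_def by auto
      have "rtail N r \<in> verts_at N s T (t - 1)" "rhead N r \<in> verts_at N s T (t - 1)"
        using res_props[OF r1] by auto
      then show ?thesis using bellman[OF r1] unfolding \<pi>_def by simp
    next
      case False
      have xe: "x0 e = 0" using False x0_def unfolding restrict_flow_def by simp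
      then have bT: "b" using r rb unfolding res_edges_def by auto
      have "tailE e \<notin> verts_at N s T (t - 1)"
      proof
        assume tv: "tailE e \<in> verts_at N s T (t - 1)"
        have "e \<in> edges_at N s T (t - 1)"
          using eE tv unfolding edges_at_def tailE_def by auto
        then show False using False by simp
      qed
      then have "\<pi> (rtail N r) = 0" unfolding \<pi>_def using rb bT by (simp add: rtail_def)
      then show ?thesis using gc pnn[of "rhead N r"] by simp
    qed
  qed
  show ?thesis
  proof (cases "v = sink N")
    case True then show ?thesis unfolding height_def by simp
  next
    case vn: False
    have vt: "v \<in> verts_at N s T t" using vV sub by auto
    have "\<pi> v \<le> height N B s T t x0 v"
    proof (rule height_greatest[OF vt vn])
      fix g assume "aug_path N s T t x0 v g"
      then have "frac_aug_path N s T t x0 v g" unfolding aug_path_def by simp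
      then show "\<pi> v \<le> path_cost N B s T t x0 g"
        using pot_lb[where \<pi>=\<pi>, OF _ vt vn ps feas] by blast
    qed
    then show ?thesis unfolding \<pi>_def x0_def using vV by simp
  qed
qed

end

theorem lemma2:
  fixes N :: "'v gnet" and s :: "nat \<Rightarrow> 'v" and T :: nat
  assumes "gnf_instance N s T"
  shows "\<exists>B0::real. \<forall>B\<ge>B0. \<forall>xs. alg_run N B s T xs \<longrightarrow>
           (\<forall>t\<in>{1..T}. \<forall>v\<in>verts_at N s T (t - 1).
              height N B s T (t - 1) (xs (t - 1)) v \<le> height N B s T t (xs t) v)"
proof (intro exI allI impI ballI)
  fix B :: real and xs t v
  assume B: "0 \<le> B" and run: "alg_run N B s T xs" and tT: "t \<in> {1..T}"
    and vV: "v \<in> verts_at N s T (t - 1)"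
  interpret gnfl N s T B using assms B by unfold_locales
  have ph: "alg_phase N B s T t (restrict_flow N s T (t - 1) (xs (t - 1))) (xs t)"
    using run tT unfolding alg_run_def by blast
  then have rt: "(alg_step N B s T t)\<^sup>*\<^sup>* (restrict_flow N s T (t - 1) (xs (t - 1))) (xs t)"
    unfolding alg_phase_def by simp
  have vt: "v \<in> verts_at N s T t" using vV tT unfolding verts_at_def by auto
  have "height N B s T (t - 1) (xs (t - 1)) v \<le> height N B s T t (restrict_flow N s T (t - 1) (xs (t - 1))) v"
    by (rule arrival_mono[OF tT vV])
  also have "\<dots> \<le> height N B s T t (xs t) v" using run_mono[OF rt tT] vt by blast
  finally show "height N B s T (t - 1) (xs (t - 1)) v \<le> height N B s T t (xs t) v" .
qed

end
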